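(* Let $P(x)=\sum_{j=0}^{n} x^{j}a_{j}$ be a (left) slice monogenic polynomial of degree $n$ with Clifford algebra coefficients $a_j\in\mathbb R_{0,m}$, defined for paravectors $x\in\mathbb R^{m+1}$, and let $P'(x)=\sum_{j=1}^n x^{j-1}ja_j$. Then $$\|P'\|\leq n\|P\|,$$ where $\|F\|=\max_{|x|\leq 1}|F(x)|$ (maximum over paravectors $x\in\mathbb R^{m+1}$ with $|x|\le 1$). Moreover, equality holds if and only if $P(x)=x^{n}a_{n}$ for some $a_{n}\in\mathbb R_{0,m}$.
   Context: $\mathbb R_{0,m}$ is the real Clifford algebra generated by $e_1,\dots,e_m$ with $e_ie_j+e_je_i=-2\delta_{ij}$; the modulus $|a|$ of an element $a\in\mathbb R_{0,m}$ is the Euclidean norm of its coordinate vector in the standard basis $\{e_A\}$. Paravectors are elements $x=x_0+\sum_{k=1}^m x_ke_k$, identified with $\mathbb R^{m+1}$. A (left) slice monogenic polynomial of degree $n$ is a function of the form $x\mapsto\sum_{j=0}^n x^ja_j$ on paravectors with coefficients $a_j\in\mathbb R_{0,m}$ on the right and $a_n\ne 0$. *)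

theory Defs
  imports "HOL-Analysis.Analysis"
begin

text \<open>The real Clifford algebra R_{0,m}. An element is represented by its coordinate
  function on the standard basis e_A, A a subset of {1..m}; coordinates outside
  Pow {1..m} are required to be 0.\<close>

type_synonym clif = "nat set \<Rightarrow> real"

definition clifford :: "nat \<Rightarrow> clif \<Rightarrow> bool" where
  "clifford m a \<longleftrightarrow> (\<forall>A. \<not> A \<subseteq> {1..m} \<longrightarrow> a A = 0)"

text \<open>Sign of e_A e_B = sign A B * e_{A symmetric-difference B}, with e_i e_i = -1.\<close>
definition blade_sign :: "nat set \<Rightarrow> nat set \<Rightarrow> real" where
  "blade_sign A B = (-1) ^ (card {(a, b). a \<in> A \<and> b \<in> B \<and> b < a} + card (A \<inter> B))"

definition cmul :: "nat \<Rightarrow> clif \<Rightarrow> clif \<Rightarrow> clif" where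
  "cmul m a b = (\<lambda>C. \<Sum>A\<in>Pow {1..m}. \<Sum>B\<in>Pow {1..m}.
      if (A - B) \<union> (B - A) = C then blade_sign A B * a A * b B else 0)"

definition cone :: clif where
  "cone = (\<lambda>A. if A = {} then 1 else 0)"

primrec cpow :: "nat \<Rightarrow> clif \<Rightarrow> nat \<Rightarrow> clif" where
  "cpow m x 0 = cone"
| "cpow m x (Suc k) = cmul m (cpow m x k) x"

definition cscale :: "real \<Rightarrow> clif \<Rightarrow> clif" where
  "cscale r a = (\<lambda>A. r * a A)"

definition cnorm :: "nat \<Rightarrow> clif \<Rightarrow> real" where
  "cnorm m a = sqrt (\<Sum>A\<in>Pow {1..m}. (a A)\<^sup>2)"

definition paravector :: "nat \<Rightarrow> clif \<Rightarrow> bool" where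
  "paravector m x \<longleftrightarrow> clifford m x \<and> (\<forall>A. 1 < card A \<longrightarrow> x A = 0)"

definition slice_poly :: "nat \<Rightarrow> (nat \<Rightarrow> clif) \<Rightarrow> nat \<Rightarrow> clif \<Rightarrow> clif" where
  "slice_poly m a n x = (\<lambda>C. \<Sum>j\<le>n. cmul m (cpow m x j) (a j) C)"

definition slice_poly_deriv :: "nat \<Rightarrow> (nat \<Rightarrow> clif) \<Rightarrow> nat \<Rightarrow> clif \<Rightarrow> clif" where
  "slice_poly_deriv m a n x =
     (\<lambda>C. \<Sum>j\<in>{1..n}. cmul m (cpow m x (j - 1)) (cscale (real j) (a j)) C)"

definition sup_norm :: "nat \<Rightarrow> (clif \<Rightarrow> clif) \<Rightarrow> real" where
  "sup_norm m F = Sup ((\<lambda>x. cnorm m (F x)) ` {x. paravector m x \<and> cnorm m x \<le> 1})"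

end

theory Submission
  imports Defs "HOL-Complex_Analysis.Complex_Analysis"
begin

definition om :: "nat \<Rightarrow> complex" where "om n = exp (\<i> * of_real (2*pi/n))"
definition eta :: "nat \<Rightarrow> complex" where "eta n = exp (\<i> * of_real (pi/n))"
definition zeta :: "nat \<Rightarrow> nat \<Rightarrow> complex" where "zeta n k = eta n * om n ^ k"

lemma om_pow: "om n ^ s = exp (\<i> * of_real (2*pi*real s/real n))"
proof -
  have "om n ^ s = exp (of_nat s * (\<i> * of_real (2*pi/n)))"
    by (simp only: om_def exp_of_nat_mult)
  also have "of_nat s * (\<i> * of_real (2*pi/n)) = \<i> * of_real (2*pi*real s/real n)" by simp
  finally show ?thesis .
qed

lemma om_pow_eq_1: assumes "n > 0" shows "om n ^ s = 1 \<longleftrightarrow> n dvd s"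
proof
  assume "om n ^ s = 1"
  then obtain j :: int where j: "2*pi*real s/real n = of_int (2*j) * pi"
    unfolding om_pow exp_eq_1 by auto
  hence "real s = of_int j * n" using assms by (simp add: field_simps)
  hence "int s = j * int n" by (metis of_int_eq_iff of_int_mult of_int_of_nat_eq)
  thus "n dvd s" by (metis dvd_triv_right int_dvd_int_iff)
next
  assume "n dvd s" then obtain t where "s = n*t" by auto
  hence "om n ^ s = (om n ^ n) ^ t" by (simp add: power_mult)
  moreover have "om n ^ n = 1" using assms unfolding om_pow
    by (simp add: mult.commute)
  ultimately show "om n ^ s = 1" by simp
qed

lemma eta_pow_n: assumes "n > 0" shows "eta n ^ n = -1"
proof -
  have "eta n ^ n = exp (of_nat n * (\<i> * of_real (pi/n)))" by (simp only: eta_def exp_of_nat_mult)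
  also have "of_nat n * (\<i> * of_real (pi/n)) = \<i> * of_real pi" using assms by simp
  finally show ?thesis by simp
qed

lemma om_pow_n: assumes "n > 0" shows "om n ^ n = 1"
  using om_pow_eq_1[OF assms, of n] by simp

lemma norm_zeta: "norm (zeta n k) = 1"
  by (simp add: zeta_def eta_def om_def norm_mult norm_power)

lemma zeta_pow_n: assumes "n > 0" shows "zeta n k ^ n = -1"
proof -
  have "zeta n k ^ n = eta n ^ n * (om n ^ n) ^ k"
    by (simp add: zeta_def power_mult_distrib flip: power_mult) (simp add: mult.commute)
  thus ?thesis using eta_pow_n[OF assms] om_pow_n[OF assms] by simp
qed

lemma zeta_ne_1: assumes "n > 0" shows "zeta n k \<noteq> 1"
  using zeta_pow_n[OF assms, of k] by auto

lemma zeta_inj: assumes "n > 0" "k < n" "l < n" "zeta n k = zeta n l" shows "k = l"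
proof (rule ccontr)
  assume ne: "k \<noteq> l"
  have e0: "eta n \<noteq> 0" by (simp add: eta_def)
  have "om n ^ k = om n ^ l" using assms(4) e0 by (simp add: zeta_def)
  { fix a b :: nat assume ab: "a < b" "b < n" "om n ^ a = om n ^ b"
    have o0: "om n \<noteq> 0" by (simp add: om_def)
    have "om n ^ b = om n ^ a * om n ^ (b - a)" using ab by (metis le_add_diff_inverse less_imp_le power_add)
    hence "om n ^ (b - a) = 1" using ab o0 by simp
    hence "n dvd (b - a)" using om_pow_eq_1 assms(1) by blast
    hence False using ab by (meson diff_less dvd_imp_le le_less_trans less_imp_diff_less zero_less_diff order.strict_trans2 linorder_not_le) }
  note * = this
  show False
  proof (cases "k < l")
    case True thus False using *[of k l] assms \<open>om n ^ k = om n ^ l\<close> by auto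
  next
    case False hence "l < k" using ne by auto
    thus False using *[of l k] assms \<open>om n ^ k = om n ^ l\<close> by auto
  qed
qed

lemma zeta_sum_pow:
  assumes "n > 0"
  shows "(\<Sum>k<n. zeta n k ^ s) = (if n dvd s then of_nat n * (-1) ^ (s div n) else 0)"
proof (cases "n dvd s")
  case True
  then obtain t where t: "s = n*t" by auto
  have "zeta n k ^ s = (-1)^t" for k using zeta_pow_n[OF assms, of k] by (simp add: t power_mult)
  thus ?thesis using True t assms by simp
next
  case False
  have "(\<Sum>k<n. zeta n k ^ s) = eta n ^ s * (\<Sum>k<n. (om n ^ s) ^ k)"
    by (simp add: zeta_def power_mult_distrib sum_distrib_left flip: power_mult)
       (simp add: mult.commute)
  also have "(\<Sum>k<n. (om n ^ s) ^ k) = 0"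
  proof -
    have ne: "om n ^ s \<noteq> 1" using False om_pow_eq_1[OF assms] by simp
    have "(om n ^ s) ^ n = 1" by (metis om_pow_n[OF assms] power_mult power_mult_distrib mult.commute power_one)
    thus ?thesis using ne by (simp add: geometric_sum)
  qed
  finally show ?thesis using False by simp
qed

definition wt :: "nat \<Rightarrow> nat \<Rightarrow> real" where "wt n k = 1 / (1 - Re (zeta n k))"

lemma geom1: "(1 - x) * (\<Sum>t<n. x ^ t) = 1 - (x::complex) ^ n"
proof (induction n)
  case (Suc n)
  have "(1 - x) * (\<Sum>t<Suc n. x ^ t) = (1 - x) * (\<Sum>t<n. x ^ t) + (1 - x) * x ^ n" by (simp add: algebra_simps)
  also have "\<dots> = 1 - x ^ Suc n" using Suc by (simp add: algebra_simps)
  finally show ?case .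
qed simp

lemma geom2: "(1 - x)^2 * (\<Sum>t<n. (of_nat t + 1) * x ^ t) = 1 - (of_nat n + 1) * x ^ n + of_nat n * (x::complex) ^ (n+1)"
  by (induction n) (auto simp: algebra_simps power2_eq_square)

lemma G_id:
  assumes "(x::complex) ^ n = -1"
  shows "(1 - x)^2 * (\<Sum>t<n. (2 * of_nat t + 2 - of_nat n) * x ^ t) = 4"
proof -
  define G where "G = (\<Sum>t<n. (2 * of_nat t + 2 - of_nat n) * x ^ t)"
  define A where "A = (\<Sum>t<n. (of_nat t + 1) * x ^ t)"
  define B where "B = (\<Sum>t<n. x ^ t)"
  have "G = (\<Sum>t<n. 2 * ((of_nat t + 1) * x ^ t) - of_nat n * x ^ t)"
    unfolding G_def by (rule sum.cong) (auto simp: algebra_simps)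
  also have "\<dots> = 2 * A - of_nat n * B"
    by (simp add: sum_distrib_left sum_subtractf A_def B_def)
  finally have GAB: "G = 2 * A - of_nat n * B" .
  have a: "(1 - x)^2 * A = 1 - (of_nat n + 1) * x ^ n + of_nat n * x ^ (n+1)" unfolding A_def by (rule geom2)
  have b: "(1 - x) * B = 1 - x ^ n" unfolding B_def by (rule geom1)
  have "(1 - x)^2 * G = 2 * ((1 - x)^2 * A) - of_nat n * (1 - x) * ((1 - x) * B)"
    unfolding GAB by (simp add: algebra_simps power2_eq_square)
  also have "\<dots> = 4" unfolding a b using assms by (simp add: algebra_simps)
  finally show ?thesis unfolding G_def .
qed

lemma wt_form:
  assumes "norm (z::complex) = 1" "z \<noteq> 1"
  shows "complex_of_real (1 / (1 - Re z)) = -2 * z / (1 - z)^2" "Re z < 1"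
proof -
  have zc: "z * cnj z = 1" using assms(1) by (simp add: complex_norm_square[symmetric])
  have "Re z \<noteq> 1"
  proof
    assume r: "Re z = 1"
    have "(Re z)^2 + (Im z)^2 = 1" using assms(1) by (simp add: cmod_def)
    hence "Im z = 0" using r by simp
    thus False using r assms(2) complex_eq_iff by auto
  qed
  moreover have "Re z \<le> 1" using abs_Re_le_cmod[of z] assms(1) by simp
  ultimately show "Re z < 1" by simp
  have "(1 - z)^2 = z * (z + cnj z - 2)" using zc by (simp add: algebra_simps power2_eq_square)
  also have "z + cnj z = 2 * of_real (Re z)" by (simp add: complex_add_cnj)
  finally have e: "(1 - z)^2 = z * (2 * of_real (Re z) - 2)" .
  have z0: "z \<noteq> 0" using assms by auto
  have "of_real (Re z) \<noteq> (1::complex)" using \<open>Re z \<noteq> 1\<close>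
    by (metis of_real_eq_1_iff)
  thus "complex_of_real (1 / (1 - Re z)) = -2 * z / (1 - z)^2" unfolding e using z0
    by (simp add: field_simps of_real_diff)
qed

lemma wt_pos: "n > 0 \<Longrightarrow> wt n k > 0"
  using wt_form(2)[OF norm_zeta zeta_ne_1] by (simp add: wt_def)

lemma wt_G:
  assumes "n > 0"
  shows "complex_of_real (wt n k) = - (zeta n k / 2) * (\<Sum>t<n. (2 * of_nat t + 2 - of_nat n) * zeta n k ^ t)"
proof -
  let ?z = "zeta n k" and ?G = "(\<Sum>t<n. (2 * of_nat t + 2 - of_nat n) * zeta n k ^ t)"
  have G: "(1 - ?z)^2 * ?G = 4" by (rule G_id[OF zeta_pow_n[OF assms]])
  have nz: "(1 - ?z)^2 \<noteq> 0" using zeta_ne_1[OF assms] by simp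
  have "complex_of_real (wt n k) = -2 * ?z / (1 - ?z)^2"
    unfolding wt_def by (rule wt_form(1)[OF norm_zeta zeta_ne_1[OF assms]])
  also have "\<dots> = - (?z / 2) * ?G" using G nz by (simp add: field_simps)
  finally show ?thesis .
qed

lemma aux_resh: "(- ((z::complex) / 2) * S) * w = - (1/2) * (S * (z * w))"
  by (simp add: algebra_simps)

lemma wt_sum:
  assumes "n > 0" "j \<le> n"
  shows "(\<Sum>k<n. complex_of_real (wt n k) * zeta n k ^ j) = of_nat n * (of_nat n / 2 - of_nat j)"
proof -
  define c where "c t = (2 * of_nat t + 2 - of_nat n :: complex)" for t
  have "(\<Sum>k<n. complex_of_real (wt n k) * zeta n k ^ j)
      = (\<Sum>k<n. - (1/2) * (\<Sum>t<n. c t * zeta n k ^ (t + 1 + j)))"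
  proof (intro sum.cong refl)
    fix k
    have "complex_of_real (wt n k) * zeta n k ^ j = - (1/2) * ((\<Sum>t<n. c t * zeta n k ^ t) * (zeta n k * zeta n k ^ j))"
      unfolding wt_G[OF assms(1)] c_def by (rule aux_resh)
    also have "(\<Sum>t<n. c t * zeta n k ^ t) * (zeta n k * zeta n k ^ j) = (\<Sum>t<n. c t * zeta n k ^ (t + 1 + j))"
      unfolding sum_distrib_right by (intro sum.cong refl) (simp only: power_add power_one_right mult_ac)
    finally show "complex_of_real (wt n k) * zeta n k ^ j = - (1/2) * (\<Sum>t<n. c t * zeta n k ^ (t + 1 + j))" .
  qed
  also have "\<dots> = - (1/2) * (\<Sum>k<n. \<Sum>t<n. c t * zeta n k ^ (t + 1 + j))"
    by (simp only: sum_distrib_left)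
  also have "\<dots> = - (1/2) * (\<Sum>t<n. \<Sum>k<n. c t * zeta n k ^ (t + 1 + j))"
    by (subst sum.swap) (rule refl)
  also have "\<dots> = - (1/2) * (\<Sum>t<n. c t * (\<Sum>k<n. zeta n k ^ (t + 1 + j)))"
    by (simp only: sum_distrib_left)
  also have "\<dots> = - (1/2) * (\<Sum>t<n. c t * (if n dvd (t+1+j) then of_nat n * (-1) ^ ((t+1+j) div n) else 0))"
    by (simp only: zeta_sum_pow[OF assms(1)])
  also have "\<dots> = of_nat n * (of_nat n / 2 - of_nat j)"
  proof (cases "j < n")
    case True
    have "(\<Sum>t<n. c t * (if n dvd (t+1+j) then of_nat n * (-1) ^ ((t+1+j) div n) else 0))
        = (\<Sum>t<n. if t = n - 1 - j then c (n-1-j) * (- of_nat n) else 0)"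
    proof (intro sum.cong refl)
      fix t assume t: "t \<in> {..<n}"
      show "c t * (if n dvd (t+1+j) then of_nat n * (-1) ^ ((t+1+j) div n) else 0)
          = (if t = n - 1 - j then c (n-1-j) * (- of_nat n) else 0)"
      proof (cases "t = n - 1 - j")
        case True
        hence "t + 1 + j = n" using \<open>j < n\<close> by simp
        thus ?thesis using True assms by simp
      next
        case False
        have "\<not> n dvd (t+1+j)"
        proof
          assume "n dvd (t+1+j)"
          then obtain q where q: "t+1+j = n*q" by auto
          have "q \<ge> 1" using q by (cases q) auto
          moreover have "q < 2" using q t \<open>j<n\<close> by (cases "q \<ge> 2") (auto dest: mult_le_mono2[of 2 q n])
          ultimately have "q = 1" by simp
          thus False using q False by simp
        qed
        thus ?thesis using False by simp
      qed
    qed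
    also have "\<dots> = c (n-1-j) * (- of_nat n)" using \<open>j<n\<close> by simp
    finally show ?thesis using True by (simp add: c_def of_nat_diff algebra_simps)
  next
    case False
    hence jn: "j = n" using assms by simp
    have "(\<Sum>t<n. c t * (if n dvd (t+1+j) then of_nat n * (-1) ^ ((t+1+j) div n) else 0))
        = (\<Sum>t<n. if t = n - 1 then c (n-1) * of_nat n else 0)"
    proof (intro sum.cong refl)
      fix t assume t: "t \<in> {..<n}"
      show "c t * (if n dvd (t+1+j) then of_nat n * (-1) ^ ((t+1+j) div n) else 0)
          = (if t = n - 1 then c (n-1) * of_nat n else 0)"
      proof (cases "t = n - 1")
        case True
        hence "t + 1 + j = n * 2" using jn assms by simp
        thus ?thesis using True assms by simp
      next
        case False
        have "\<not> n dvd (t+1+j)"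
        proof
          assume "n dvd (t+1+j)"
          then obtain q where q: "t+1+j = n*q" by auto
          have "q \<ge> 2"
          proof (rule ccontr)
            assume "\<not> q \<ge> 2" hence "q \<le> 1" by simp
            hence "n*q \<le> n" by (metis mult.right_neutral mult_le_mono2)
            thus False using q jn by linarith
          qed
          moreover have "q < 2"
          proof (rule ccontr)
            assume "\<not> q < 2" hence "n*2 \<le> n*q" by simp
            moreover have "t + 1 < n" using t False by auto
            ultimately show False using q jn by linarith
          qed
          ultimately show False by simp
        qed
        thus ?thesis using False by simp
      qed
    qed
    also have "\<dots> = c (n-1) * of_nat n" using assms by simp
    finally show ?thesis using jn assms by (simp add: c_def of_nat_diff algebra_simps)
  qed
  finally show ?thesis .
qed

definition qp :: "nat \<Rightarrow> (nat \<Rightarrow> complex) \<Rightarrow> complex \<Rightarrow> complex" where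
  "qp n c z = (\<Sum>j\<le>n. c j * z ^ j)"
definition dp :: "nat \<Rightarrow> (nat \<Rightarrow> complex) \<Rightarrow> complex \<Rightarrow> complex" where
  "dp n c z = (\<Sum>j\<in>{1..n}. of_nat j * c j * z ^ (j - 1))"

lemma riesz:
  assumes "n > 0"
  shows "z * dp n c z = (of_nat n / 2) * qp n c z
           - (1 / of_nat n) * (\<Sum>k<n. complex_of_real (wt n k) * qp n c (z * zeta n k))"
proof -
  have "(\<Sum>k<n. complex_of_real (wt n k) * qp n c (z * zeta n k))
      = (\<Sum>k<n. \<Sum>j\<le>n. c j * z ^ j * (complex_of_real (wt n k) * zeta n k ^ j))"
    unfolding qp_def by (intro sum.cong refl) (simp add: sum_distrib_left power_mult_distrib mult_ac)
  also have "\<dots> = (\<Sum>j\<le>n. \<Sum>k<n. c j * z ^ j * (complex_of_real (wt n k) * zeta n k ^ j))"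
    by (rule sum.swap)
  also have "\<dots> = (\<Sum>j\<le>n. c j * z ^ j * (of_nat n * (of_nat n / 2 - of_nat j)))"
    by (intro sum.cong refl) (simp add: sum_distrib_left[symmetric] wt_sum[OF assms])
  finally have e: "(\<Sum>k<n. complex_of_real (wt n k) * qp n c (z * zeta n k))
      = (\<Sum>j\<le>n. c j * z ^ j * (of_nat n * (of_nat n / 2 - of_nat j)))" .
  have "(of_nat n / 2) * qp n c z - (1 / of_nat n) * (\<Sum>j\<le>n. c j * z ^ j * (of_nat n * (of_nat n / 2 - of_nat j)))
      = (\<Sum>j\<le>n. of_nat j * c j * z ^ j)"
    unfolding qp_def sum_distrib_left sum_subtractf[symmetric]
    by (intro sum.cong refl) (use assms in \<open>simp add: field_simps\<close>)
  also have "\<dots> = (\<Sum>j\<in>{1..n}. of_nat j * c j * z ^ j)"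
    by (rule sum.mono_neutral_right) auto
  also have "\<dots> = z * dp n c z"
    unfolding dp_def sum_distrib_left
    by (intro sum.cong refl) (auto simp: power_eq_if)
  finally show ?thesis using e by simp
qed

lemma wt_total: assumes "n > 0" shows "(\<Sum>k<n. wt n k) = real n * real n / 2"
proof -
  have "complex_of_real (\<Sum>k<n. wt n k) = (\<Sum>k<n. complex_of_real (wt n k) * zeta n k ^ 0)" by simp
  also have "\<dots> = of_nat n * (of_nat n / 2 - of_nat 0)" by (rule wt_sum[OF assms]) simp
  finally have "complex_of_real (\<Sum>k<n. wt n k) = complex_of_real (real n * real n / 2)" by simp
  thus ?thesis by (simp only: of_real_eq_iff)
qed

lemma bern_circle:
  assumes "n > 0" "\<And>w. norm w = 1 \<Longrightarrow> norm (qp n c w) \<le> M" "norm z = 1"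
  shows "norm (dp n c z) \<le> real n * M"
proof -
  have M0: "0 \<le> M" using assms(2)[of 1] by (meson norm_ge_zero norm_one order.trans)
  have "norm (dp n c z) = norm (z * dp n c z)" using assms(3) by (simp add: norm_mult)
  also have "\<dots> \<le> norm ((of_nat n / 2) * qp n c z)
        + norm ((1 / of_nat n) * (\<Sum>k<n. complex_of_real (wt n k) * qp n c (z * zeta n k)))"
    unfolding riesz[OF assms(1)] by (rule norm_triangle_ineq4)
  also have "norm ((of_nat n / 2) * qp n c z) \<le> real n / 2 * M"
    using assms(2)[OF assms(3)] by (simp add: norm_mult norm_divide mult_left_mono)
  also have "norm ((1 / of_nat n) * (\<Sum>k<n. complex_of_real (wt n k) * qp n c (z * zeta n k)))
      \<le> (1 / real n) * (\<Sum>k<n. wt n k * M)"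
  proof -
    have "norm (\<Sum>k<n. complex_of_real (wt n k) * qp n c (z * zeta n k)) \<le> (\<Sum>k<n. norm (complex_of_real (wt n k) * qp n c (z * zeta n k)))"
      by (rule norm_sum)
    also have "\<dots> \<le> (\<Sum>k<n. wt n k * M)"
    proof (rule sum_mono)
      fix k assume "k \<in> {..<n}"
      have "norm (z * zeta n k) = 1" using assms(3) by (simp add: norm_mult norm_zeta)
      hence "norm (qp n c (z * zeta n k)) \<le> M" by (rule assms(2))
      thus "norm (complex_of_real (wt n k) * qp n c (z * zeta n k)) \<le> wt n k * M"
        using wt_pos[OF assms(1), of k] by (simp add: norm_mult mult_left_mono)
    qed
    finally show ?thesis by (simp add: norm_mult norm_divide divide_right_mono)
  qed
  also have "(1 / real n) * (\<Sum>k<n. wt n k * M) = real n / 2 * M"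
    unfolding sum_distrib_right[symmetric] wt_total[OF assms(1)] using assms(1) by simp
  finally show ?thesis by (simp add: algebra_simps)
qed

lemma dp_holo: "dp n c holomorphic_on S"
  unfolding dp_def by (intro holomorphic_intros)

lemma bern_disc:
  assumes "n > 0" "\<And>w. norm w = 1 \<Longrightarrow> norm (qp n c w) \<le> M" "norm z \<le> 1"
  shows "norm (dp n c z) \<le> real n * M"
proof (cases "norm z = 1")
  case True thus ?thesis using bern_circle[OF assms(1,2)] by simp
next
  case False
  hence zb: "z \<in> ball 0 1" using assms(3) by simp
  show ?thesis
  proof (rule maximum_modulus_frontier[of "dp n c" "ball 0 1"])
    show "dp n c holomorphic_on interior (ball 0 1)" by (rule dp_holo)
    show "continuous_on (closure (ball 0 1)) (dp n c)"
      by (rule holomorphic_on_imp_continuous_on[OF dp_holo])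
    show "bounded (ball (0::complex) 1)" by simp
    show "norm (dp n c w) \<le> real n * M" if "w \<in> frontier (ball 0 1)" for w
      using that bern_circle[OF assms(1,2)] by (simp add: frontier_ball)
  qed (use zb in auto)
qed

lemma conv_eq:
  fixes v :: "'i \<Rightarrow> complex" and lam :: "'i \<Rightarrow> real"
  assumes "finite I" "\<And>i. i \<in> I \<Longrightarrow> lam i > 0" "\<And>i. i \<in> I \<Longrightarrow> norm (v i) \<le> M"
    and "norm (\<Sum>i\<in>I. of_real (lam i) * v i) \<ge> (\<Sum>i\<in>I. lam i) * M" "i \<in> I" "j \<in> I"
  shows "v i = v j"
proof -
  define s where "s = (\<Sum>i\<in>I. of_real (lam i) * v i)"
  define L where "L = (\<Sum>i\<in>I. lam i)"
  have L0: "L > 0" unfolding L_def using assms(1,2,5) by (meson sum_pos2 order.refl less_imp_le)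
  have M0: "M \<ge> 0" using assms(3)[OF assms(5)] norm_ge_zero order.trans by blast
  have ns: "norm s \<le> L * M"
  proof -
    have "norm s \<le> (\<Sum>i\<in>I. norm (of_real (lam i) * v i))" unfolding s_def by (rule norm_sum)
    also have "\<dots> \<le> (\<Sum>i\<in>I. lam i * M)"
    proof (rule sum_mono)
      fix i assume i: "i \<in> I"
      have "norm (of_real (lam i) * v i) = lam i * norm (v i)" using assms(2)[OF i] by (simp add: norm_mult)
      also have "\<dots> \<le> lam i * M" using assms(2,3)[OF i] by (simp add: mult_left_mono)
      finally show "norm (of_real (lam i) * v i) \<le> lam i * M" .
    qed
    finally show ?thesis unfolding L_def sum_distrib_right .
  qed
  hence nsL: "norm s = L * M" using assms(4) unfolding s_def L_def by simp
  have re: "Re (cnj s * v i) \<le> norm s * M" if "i \<in> I" for i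
  proof -
    have "Re (cnj s * v i) \<le> norm (cnj s * v i)" by (rule complex_Re_le_cmod)
    also have "\<dots> \<le> norm s * M" using assms(3)[OF that] by (simp add: norm_mult mult_left_mono)
    finally show ?thesis .
  qed
  have se: "s = (\<Sum>i\<in>I. of_real (lam i) * v i)" by (simp add: s_def)
  have "cnj s * s = (\<Sum>i\<in>I. cnj s * (of_real (lam i) * v i))"
    by (subst (2) se) (rule sum_distrib_left)
  hence "Re (cnj s * s) = (\<Sum>i\<in>I. Re (cnj s * (of_real (lam i) * v i)))" by (simp add: Re_sum)
  also have "\<dots> = (\<Sum>i\<in>I. lam i * Re (cnj s * v i))"
    by (intro sum.cong refl) (simp add: mult.left_commute[of _ "of_real _"])
  finally have "(\<Sum>i\<in>I. lam i * Re (cnj s * v i)) = Re (cnj s * s)" by simp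
  also have "\<dots> = norm s * norm s" by (simp add: complex_mult_cnj cmod_def power2_eq_square)
  also have "\<dots> = (\<Sum>i\<in>I. lam i * (norm s * M))" using nsL by (simp add: sum_distrib_right[symmetric] L_def)
  finally have sumeq: "(\<Sum>i\<in>I. lam i * (norm s * M) - lam i * Re (cnj s * v i)) = 0"
    by (simp add: sum_subtractf)
  have each: "Re (cnj s * v i) = norm s * M" if "i \<in> I" for i
  proof -
    have "\<forall>i\<in>I. lam i * (norm s * M) - lam i * Re (cnj s * v i) = 0"
      using sum_nonneg_eq_0_iff[OF assms(1), of "\<lambda>i. lam i * (norm s * M) - lam i * Re (cnj s * v i)"] sumeq
        re assms(2) by (simp add: mult_left_mono less_imp_le)
    hence "lam i * (norm s * M - Re (cnj s * v i)) = 0" using that by (simp add: algebra_simps)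
    thus ?thesis using assms(2)[OF that] by simp
  qed
  have close: "v i = s / of_real L" if "i \<in> I" for i
  proof -
    have "(norm (v i - s / of_real L))^2 = (Re (v i) - Re s / L)^2 + (Im (v i) - Im s / L)^2"
      by (simp add: cmod_def)
    also have "\<dots> = (norm (v i))^2 - 2 * Re (cnj s * v i) / L + (norm s / L)^2"
      using L0 by (simp add: cmod_def power2_eq_square field_simps)
    also have "\<dots> \<le> M^2 - 2 * (norm s * M) / L + (norm s / L)^2"
      using assms(3)[OF that] each[OF that] by (simp add: power_mono)
    also have "\<dots> = 0" using nsL L0 by (simp add: field_simps power2_eq_square)
    finally show ?thesis by simp
  qed
  show ?thesis using close[OF assms(5)] close[OF assms(6)] by simp
qed

lemma nodes_zero:
  assumes "n > 0" "z \<noteq> 0"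
    and "(\<Sum>j\<le>n. d j * z ^ j) = 0" "\<And>k. k < n \<Longrightarrow> (\<Sum>j\<le>n. d j * (z * zeta n k) ^ j) = 0"
  shows "\<forall>j\<le>n. d j = 0"
proof -
  define p where "p = (\<Sum>j\<le>n. monom (d j) j)"
  have pe: "poly p w = (\<Sum>j\<le>n. d j * w ^ j)" for w
    unfolding p_def by (simp add: poly_sum poly_monom)
  have dg: "degree p \<le> n" unfolding p_def
    by (rule degree_sum_le) (auto intro: order.trans[OF degree_monom_le])
  define A where "A = insert z ((\<lambda>k. z * zeta n k) ` {..<n})"
  have "z \<notin> (\<lambda>k. z * zeta n k) ` {..<n}" using zeta_ne_1[OF assms(1)] assms(2) by auto
  moreover have "inj_on (\<lambda>k. z * zeta n k) {..<n}"
    using zeta_inj[OF assms(1)] assms(2) by (auto simp: inj_on_def)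
  ultimately have cA: "card A = n + 1" unfolding A_def by (simp add: card_image)
  have "p = 0"
    by (rule poly_eqI_degree[of A]) (use pe assms(3,4) dg cA in \<open>auto simp: A_def\<close>)
  hence "coeff p j = 0" for j by simp
  moreover have "coeff p j = d j" if "j \<le> n" for j
    unfolding p_def coeff_sum using that by (simp add: coeff_monom)
  ultimately show ?thesis by metis
qed

lemma bern_eq:
  assumes n0: "n > 0" and bd: "\<And>w. norm w = 1 \<Longrightarrow> norm (qp n c w) \<le> M"
    and xi: "norm \<xi> \<le> 1" and eq: "norm (dp n c \<xi>) \<ge> real n * M"
  shows "\<forall>j<n. c j = 0"
proof -
  obtain z where z1: "norm z = 1" and zeq: "norm (dp n c z) \<ge> real n * M"
  proof (cases "norm \<xi> = 1")
    case True thus ?thesis using that eq by blast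
  next
    case False
    hence xb: "\<xi> \<in> ball 0 1" using xi by simp
    have "dp n c constant_on UNIV"
    proof (rule maximum_modulus_principle[of "dp n c" UNIV "ball 0 1" \<xi>])
      show "dp n c holomorphic_on UNIV" by (rule dp_holo)
      show "norm (dp n c w) \<le> norm (dp n c \<xi>)" if "w \<in> ball 0 1" for w
        using bern_disc[OF n0 bd, of w] that eq by simp
    qed (use xb in auto)
    then obtain k where "\<And>x. dp n c x = k" unfolding constant_on_def by blast
    hence "dp n c 1 = dp n c \<xi>" by simp
    thus ?thesis using that[of 1] eq by simp
  qed
  obtain m where nm: "n = Suc m" using n0 by (cases n) auto
  define lam where "lam i = (if i = 0 then real n / 2 else wt n (i - 1) / real n)" for i
  define v where "v i = (if i = 0 then qp n c z else - qp n c (z * zeta n (i - 1)))" for i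
  have shift: "(\<Sum>i\<le>n. f i) = f 0 + (\<Sum>k<n. f (Suc k))" for f :: "nat \<Rightarrow> 'a::comm_monoid_add"
    unfolding nm sum.atMost_Suc_shift lessThan_Suc_atMost ..
  have "(\<Sum>i\<le>n. of_real (lam i) * v i) = of_real (real n / 2) * qp n c z
      + (\<Sum>k<n. of_real (wt n k / real n) * (- qp n c (z * zeta n k)))"
    unfolding shift by (simp add: lam_def v_def)
  also have "(\<Sum>k<n. of_real (wt n k / real n) * (- qp n c (z * zeta n k)))
      = - (1 / of_nat n) * (\<Sum>k<n. complex_of_real (wt n k) * qp n c (z * zeta n k))"
    unfolding sum_distrib_left by (intro sum.cong refl) simp
  also have "of_real (real n / 2) * qp n c z + - (1 / of_nat n) * (\<Sum>k<n. complex_of_real (wt n k) * qp n c (z * zeta n k))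
      = z * dp n c z"
    unfolding riesz[OF n0] by simp
  finally have sv: "(\<Sum>i\<le>n. of_real (lam i) * v i) = z * dp n c z" .
  have sl: "(\<Sum>i\<le>n. lam i) = real n"
  proof -
    have "(\<Sum>i\<le>n. lam i) = real n / 2 + (\<Sum>k<n. wt n k / real n)"
      unfolding shift by (simp add: lam_def)
    also have "(\<Sum>k<n. wt n k / real n) = real n / 2"
      unfolding sum_divide_distrib[symmetric] wt_total[OF n0] using n0 by simp
    finally show ?thesis by simp
  qed
  have allv: "v i = v 0" if "i \<le> n" for i
  proof (rule conv_eq[of "{..n}" lam v M])
    show "lam i > 0" if "i \<in> {..n}" for i
      using n0 wt_pos[OF n0] by (simp add: lam_def)
    show "norm (v i) \<le> M" if "i \<in> {..n}" for i
    proof (cases "i = 0")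
      case True thus ?thesis using bd[OF z1] by (simp add: v_def)
    next
      case False
      have "norm (z * zeta n (i - 1)) = 1" using z1 by (simp add: norm_mult norm_zeta)
      thus ?thesis using bd False by (simp add: v_def)
    qed
    show "(\<Sum>i\<in>{..n}. lam i) * M \<le> norm (\<Sum>i\<in>{..n}. complex_of_real (lam i) * v i)"
      unfolding sv sl using zeq z1 by (simp add: norm_mult)
  qed (use that in auto)
  have vk: "qp n c (z * zeta n k) = - qp n c z" if "k < n" for k
    using allv[of "Suc k"] that by (simp add: v_def) (metis minus_minus)
  define e where "e = qp n c z / z ^ n"
  define d where "d j = c j - (if j = n then e else 0)" for j
  have dsum: "(\<Sum>j\<le>n. d j * w ^ j) = qp n c w - e * w ^ n" for w
  proof -
    have "(\<Sum>j\<le>n. d j * w ^ j) = (\<Sum>j\<le>n. c j * w ^ j) - (\<Sum>j\<le>n. (if j = n then e else 0) * w ^ j)"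
      unfolding d_def by (simp add: algebra_simps sum_subtractf)
    also have "(\<Sum>j\<le>n. (if j = n then e else 0) * w ^ j) = (\<Sum>j\<le>n. if j = n then e * w ^ n else 0)"
      by (intro sum.cong) auto
    also have "\<dots> = e * w ^ n" by simp
    finally show ?thesis unfolding qp_def .
  qed
  have zn: "z \<noteq> 0" using z1 by auto
  have "\<forall>j\<le>n. d j = 0"
  proof (rule nodes_zero[OF n0 zn])
    show "(\<Sum>j\<le>n. d j * z ^ j) = 0" unfolding dsum e_def using zn by simp
    show "(\<Sum>j\<le>n. d j * (z * zeta n k) ^ j) = 0" if "k < n" for k
      unfolding dsum e_def vk[OF that] using zn zeta_pow_n[OF n0, of k]
      by (simp add: power_mult_distrib)
  qed
  thus ?thesis by (simp add: d_def)
qed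


definition flip :: "nat \<Rightarrow> nat set \<Rightarrow> nat set" where
  "flip k D = (if k \<in> D then D - {k} else insert k D)"

definition bsgn :: "nat \<Rightarrow> nat set \<Rightarrow> real" where
  "bsgn k D = (-1) ^ (card {b\<in>D. b < k} + (if k \<in> D then 1 else 0))"

definition isvec :: "nat \<Rightarrow> clif \<Rightarrow> bool" where
  "isvec m w \<longleftrightarrow> clifford m w \<and> (\<forall>A. card A \<noteq> 1 \<longrightarrow> w A = 0)"

definition ip :: "nat \<Rightarrow> clif \<Rightarrow> clif \<Rightarrow> real" where
  "ip m a b = (\<Sum>A\<in>Pow {1..m}. a A * b A)"

lemma flip_flip[simp]: "flip k (flip k D) = D"
  by (auto simp: flip_def)

lemma flip_comm: "flip k (flip l D) = flip l (flip k D)"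
  by (auto simp: flip_def)

lemma flip_sd: "(({k} - B) \<union> (B - {k}) = C) \<longleftrightarrow> B = flip k C"
  by (auto simp: flip_def)

lemma flip_Pow: "k \<in> {1..m} \<Longrightarrow> flip k D \<subseteq> {1..m} \<longleftrightarrow> D \<subseteq> {1..m}"
  by (auto simp: flip_def)

lemma flip_finite: "finite (flip k D) \<longleftrightarrow> finite D"
  by (auto simp: flip_def)

lemma sgn_sq: "bsgn k D * bsgn k D = 1"
  by (simp add: bsgn_def flip: power_add)

lemma sgn_flip_same: "bsgn k (flip k D) = - bsgn k D"
proof -
  have e: "{b \<in> flip k D. b < k} = {b\<in>D. b < k}" by (auto simp: flip_def)
  show ?thesis unfolding bsgn_def e by (auto simp: flip_def)
qed

lemma sgn_flip_other:
  assumes "finite D" "k \<noteq> l"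
  shows "bsgn l (flip k D) = (if k < l then -1 else 1) * bsgn l D"
proof (cases "k < l")
  case False
  have e: "{b \<in> flip k D. b < l} = {b\<in>D. b < l}" using False by (auto simp: flip_def)
  have "(l \<in> flip k D) = (l \<in> D)" using assms(2) by (auto simp: flip_def)
  thus ?thesis using False unfolding bsgn_def e by simp
next
  case True
  have m: "(l \<in> flip k D) = (l \<in> D)" using assms(2) by (auto simp: flip_def)
  have fin: "finite {b\<in>D. b < l}" using assms(1) by simp
  show ?thesis
  proof (cases "k \<in> D")
    case True
    have e: "{b \<in> flip k D. b < l} = {b\<in>D. b < l} - {k}" using True by (auto simp: flip_def)
    have c: "card {b\<in>D. b < l} = Suc (card ({b\<in>D. b < l} - {k}))"
      using True \<open>k < l\<close> fin by (metis (no_types, lifting) card_Suc_Diff1 mem_Collect_eq)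
    show ?thesis unfolding bsgn_def e m using \<open>k<l\<close> c by simp
  next
    case False
    have e: "{b \<in> flip k D. b < l} = insert k {b\<in>D. b < l}" using False \<open>k<l\<close> by (auto simp: flip_def)
    have c: "card (insert k {b\<in>D. b < l}) = Suc (card {b\<in>D. b < l})"
      using False fin by simp
    show ?thesis unfolding bsgn_def e m using \<open>k<l\<close> c by simp
  qed
qed

lemma blade_sign_single:
  assumes "finite B" shows "blade_sign {k} B = bsgn k B"
proof -
  have "{(a, b). a \<in> {k} \<and> b \<in> B \<and> b < a} = (\<lambda>b. (k, b)) ` {b\<in>B. b < k}" by auto
  hence "card {(a, b). a \<in> {k} \<and> b \<in> B \<and> b < a} = card {b\<in>B. b < k}"
    by (simp add: card_image inj_on_def)
  moreover have "card ({k} \<inter> B) = (if k \<in> B then 1 else 0)" by auto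
  ultimately show ?thesis unfolding blade_sign_def bsgn_def by simp
qed

lemma blade_sign_empty: "blade_sign {} B = 1" "blade_sign A {} = 1"
  by (simp_all add: blade_sign_def)

lemma sum_singletons:
  fixes m :: nat
  assumes "\<And>A. A \<in> Pow {1..m} \<Longrightarrow> card A \<noteq> 1 \<Longrightarrow> f A = 0"
  shows "(\<Sum>A\<in>Pow {1..m}. f A) = (\<Sum>k\<in>{1..m}. f {k})"
proof -
  have "(\<Sum>A\<in>Pow {1..m}. f A) = (\<Sum>A\<in>(\<lambda>k. {k}) ` {1..m}. f A)"
  proof (rule sum.mono_neutral_right)
    show "\<forall>A\<in>Pow {1..m} - (\<lambda>k. {k}) ` {1..m}. f A = 0"
      using assms by (auto simp: card_1_singleton_iff)
  qed auto
  also have "\<dots> = (\<Sum>k\<in>{1..m}. f {k})" by (simp add: sum.reindex)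
  finally show ?thesis .
qed

lemma sum_single_pt:
  assumes "finite S" "\<And>x. x \<in> S \<Longrightarrow> x \<noteq> pt \<Longrightarrow> f x = 0"
  shows "(\<Sum>x\<in>S. f x) = (if pt \<in> S then f pt else 0)"
proof -
  have "(\<Sum>x\<in>S. f x) = (\<Sum>x\<in>S. if x = pt then f pt else 0)"
    using assms(2) by (intro sum.cong) auto
  thus ?thesis using assms(1) by simp
qed

lemma clifford_cmul: "clifford m (cmul m a b)"
  unfolding clifford_def cmul_def
proof (intro allI impI sum.neutral ballI)
  fix C A B assume "\<not> C \<subseteq> {1..m}" "A \<in> Pow {1..m}" "B \<in> Pow {1..m}"
  hence "(A - B) \<union> (B - A) \<noteq> C" by auto
  thus "(if (A - B) \<union> (B - A) = C then blade_sign A B * a A * b B else 0) = 0" by simp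
qed

lemma cmul_vec_left:
  assumes "isvec m w" "clifford m a"
  shows "cmul m w a C = (\<Sum>k\<in>{1..m}. w {k} * bsgn k (flip k C) * a (flip k C))"
proof -
  have "cmul m w a C = (\<Sum>k\<in>{1..m}. \<Sum>B\<in>Pow {1..m}.
      if ({k} - B) \<union> (B - {k}) = C then blade_sign {k} B * w {k} * a B else 0)"
    unfolding cmul_def
    by (rule sum_singletons) (use assms(1) in \<open>auto simp: isvec_def intro!: sum.neutral\<close>)
  also have "\<dots> = (\<Sum>k\<in>{1..m}. w {k} * bsgn k (flip k C) * a (flip k C))"
  proof (intro sum.cong refl)
    fix k assume k: "k \<in> {1..m}"
    have "(\<Sum>B\<in>Pow {1..m}. if ({k} - B) \<union> (B - {k}) = C then blade_sign {k} B * w {k} * a B else 0)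
        = (if flip k C \<in> Pow {1..m} then blade_sign {k} (flip k C) * w {k} * a (flip k C) else 0)"
      by (subst sum_single_pt[where pt="flip k C"]) (auto simp: flip_sd)
    also have "\<dots> = w {k} * bsgn k (flip k C) * a (flip k C)"
    proof (cases "flip k C \<in> Pow {1..m}")
      case True
      hence "finite (flip k C)" by (auto intro: finite_subset)
      thus ?thesis using True by (simp add: blade_sign_single)
    next
      case False
      thus ?thesis using assms(2) by (simp add: clifford_def)
    qed
    finally show "(\<Sum>B\<in>Pow {1..m}. if ({k} - B) \<union> (B - {k}) = C then blade_sign {k} B * w {k} * a B else 0)
        = w {k} * bsgn k (flip k C) * a (flip k C)" .
  qed
  finally show ?thesis .
qed

lemma cmul_cone_left:
  assumes "clifford m b" shows "cmul m cone b = b"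
proof
  fix C
  have "cmul m cone b C = (\<Sum>A\<in>Pow {1..m}. \<Sum>B\<in>Pow {1..m}. if (A - B) \<union> (B - A) = C then blade_sign A B * cone A * b B else 0)"
    by (simp add: cmul_def)
  also have "\<dots> = (if {} \<in> Pow {1..m} then (\<Sum>B\<in>Pow {1..m}. if ({} - B) \<union> (B - {}) = C then blade_sign {} B * cone {} * b B else 0) else 0)"
  proof (rule sum_single_pt)
    fix A :: "nat set" assume "A \<noteq> {}"
    hence "cone A = 0" by (simp add: cone_def)
    thus "(\<Sum>B\<in>Pow {1..m}. if (A - B) \<union> (B - A) = C then blade_sign A B * cone A * b B else 0) = 0"
      by (intro sum.neutral) simp
  qed simp
  also have "\<dots> = (\<Sum>B\<in>Pow {1..m}. if B = C then b B else 0)"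
    by (simp add: cone_def blade_sign_empty)
  also have "\<dots> = (if C \<in> Pow {1..m} then b C else 0)" by simp
  also have "\<dots> = b C" using assms by (auto simp: clifford_def)
  finally show "cmul m cone b C = b C" .
qed

lemma cmul_cone_right:
  assumes "clifford m a" shows "cmul m a cone = a"
proof
  fix C
  have "cmul m a cone C = (\<Sum>A\<in>Pow {1..m}. \<Sum>B\<in>Pow {1..m}. if (A - B) \<union> (B - A) = C then blade_sign A B * a A * cone B else 0)"
    by (simp add: cmul_def)
  also have "\<dots> = (\<Sum>A\<in>Pow {1..m}. if A = C then a A else 0)"
  proof (intro sum.cong refl)
    fix A assume A: "A \<in> Pow {1..m}"
    have "(\<Sum>B\<in>Pow {1..m}. if (A - B) \<union> (B - A) = C then blade_sign A B * a A * cone B else 0)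
       = (if {} \<in> Pow {1..m} then (if (A - {}) \<union> ({} - A) = C then blade_sign A {} * a A * cone {} else 0) else 0)"
      by (rule sum_single_pt) (auto simp: cone_def)
    also have "\<dots> = (if A = C then a A else 0)" by (simp add: cone_def blade_sign_empty)
    finally show "(\<Sum>B\<in>Pow {1..m}. if (A - B) \<union> (B - A) = C then blade_sign A B * a A * cone B else 0) = (if A = C then a A else 0)" .
  qed
  also have "\<dots> = (if C \<in> Pow {1..m} then a C else 0)" by simp
  also have "\<dots> = a C" using assms by (auto simp: clifford_def)
  finally show "cmul m a cone C = a C" .
qed

lemma cmul_lin_left:
  "cmul m (\<lambda>A. x * p A + y * q A) b = (\<lambda>C. x * cmul m p b C + y * cmul m q b C)"
  unfolding cmul_def
  by (rule ext) (simp add: sum_distrib_left sum.distrib[symmetric] algebra_simps if_distrib cong: if_cong)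

lemma cmul_lin_right:
  "cmul m b (\<lambda>A. x * p A + y * q A) = (\<lambda>C. x * cmul m b p C + y * cmul m b q C)"
  unfolding cmul_def
  by (rule ext) (simp add: sum_distrib_left sum.distrib[symmetric] algebra_simps if_distrib cong: if_cong)

lemma antisym_dsum:
  assumes "finite S" "\<And>k l. k \<in> S \<Longrightarrow> l \<in> S \<Longrightarrow> k \<noteq> l \<Longrightarrow> f l k = - f k l"
  shows "(\<Sum>k\<in>S. \<Sum>l\<in>S. f k l) = (\<Sum>k\<in>S. f k k :: real)"
proof -
  have sw: "(\<Sum>k\<in>S. \<Sum>l\<in>S. f k l) = (\<Sum>k\<in>S. \<Sum>l\<in>S. f l k)" by (rule sum.swap)
  have "(\<Sum>k\<in>S. \<Sum>l\<in>S. f k l + f l k) = (\<Sum>k\<in>S. \<Sum>l\<in>S. f k l) + (\<Sum>k\<in>S. \<Sum>l\<in>S. f l k)"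
    by (simp add: sum.distrib)
  hence "2 * (\<Sum>k\<in>S. \<Sum>l\<in>S. f k l) = (\<Sum>k\<in>S. \<Sum>l\<in>S. f k l + f l k)"
    using sw by linarith
  also have "\<dots> = (\<Sum>k\<in>S. 2 * f k k)"
  proof (intro sum.cong refl)
    fix k assume k: "k \<in> S"
    have "(\<Sum>l\<in>S. f k l + f l k) = (if k \<in> S then f k k + f k k else 0)"
    proof (rule sum_single_pt)
      fix l assume l: "l \<in> S" "l \<noteq> k"
      have "f l k = - f k l" by (rule assms(2)[OF k l(1)]) (use l in auto)
      thus "f k l + f l k = 0" by linarith
    qed (use assms(1) in auto)
    thus "(\<Sum>l\<in>S. f k l + f l k) = 2 * f k k" using k by simp
  qed
  also have "\<dots> = 2 * (\<Sum>k\<in>S. f k k)" by (simp only: sum_distrib_left)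
  finally show ?thesis by linarith
qed

lemma flip_reindex:
  assumes "k \<in> {1..m}"
  shows "(\<Sum>C\<in>Pow {1..m}. h C) = (\<Sum>D\<in>Pow {1..m}. h (flip k D))"
proof -
  have P: "flip k D \<in> Pow {1..m}" if "D \<in> Pow {1..m}" for D
    using flip_Pow[OF assms, of D] that by simp
  show ?thesis
    by (rule sum.reindex_bij_witness[of _ "flip k" "flip k"]) (use P in auto)
qed

lemma ip_vec_sq: "isvec m w \<Longrightarrow> ip m w w = (\<Sum>k\<in>{1..m}. w {k} * w {k})"
  unfolding ip_def by (rule sum_singletons) (auto simp: isvec_def)

lemma skew:
  assumes w: "isvec m w" and a: "clifford m a" and b: "clifford m b"
  shows "ip m (cmul m w a) b = - ip m a (cmul m w b)"
proof -
  have "ip m (cmul m w a) b = (\<Sum>C\<in>Pow {1..m}. \<Sum>k\<in>{1..m}. w {k} * bsgn k (flip k C) * a (flip k C) * b C)"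
    unfolding ip_def cmul_vec_left[OF w a] by (simp add: sum_distrib_right)
  also have "\<dots> = (\<Sum>k\<in>{1..m}. \<Sum>C\<in>Pow {1..m}. w {k} * bsgn k (flip k C) * a (flip k C) * b C)"
    by (rule sum.swap)
  also have "\<dots> = (\<Sum>k\<in>{1..m}. \<Sum>D\<in>Pow {1..m}. w {k} * bsgn k D * a D * b (flip k D))"
  proof (rule sum.cong[OF refl])
    fix k :: nat assume k: "k \<in> {1..m}"
    show "(\<Sum>C\<in>Pow {1..m}. w {k} * bsgn k (flip k C) * a (flip k C) * b C)
        = (\<Sum>D\<in>Pow {1..m}. w {k} * bsgn k D * a D * b (flip k D))"
      by (subst flip_reindex[OF k]) simp
  qed
  also have "\<dots> = (\<Sum>k\<in>{1..m}. \<Sum>D\<in>Pow {1..m}. - (a D * (w {k} * bsgn k (flip k D) * b (flip k D))))"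
    by (intro sum.cong refl) (simp add: sgn_flip_same)
  also have "\<dots> = - (\<Sum>k\<in>{1..m}. \<Sum>D\<in>Pow {1..m}. a D * (w {k} * bsgn k (flip k D) * b (flip k D)))"
    by (simp add: sum_negf)
  also have "(\<Sum>k\<in>{1..m}. \<Sum>D\<in>Pow {1..m}. a D * (w {k} * bsgn k (flip k D) * b (flip k D))) = ip m a (cmul m w b)"
  proof -
    have "ip m a (cmul m w b) = (\<Sum>D\<in>Pow {1..m}. \<Sum>k\<in>{1..m}. a D * (w {k} * bsgn k (flip k D) * b (flip k D)))"
      unfolding ip_def cmul_vec_left[OF w b] by (simp only: sum_distrib_left)
    also have "\<dots> = (\<Sum>k\<in>{1..m}. \<Sum>D\<in>Pow {1..m}. a D * (w {k} * bsgn k (flip k D) * b (flip k D)))"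
      by (rule sum.swap)
    finally show ?thesis by simp
  qed
  finally show ?thesis .
qed

lemma J_J:
  assumes w: "isvec m w" and b: "clifford m b"
  shows "cmul m w (cmul m w b) = (\<lambda>C. - ip m w w * b C)"
proof
  fix C
  show "cmul m w (cmul m w b) C = - ip m w w * b C"
  proof (cases "C \<subseteq> {1..m}")
    case False
    thus ?thesis using clifford_cmul[of m w "cmul m w b"] b by (simp add: clifford_def)
  next
    case True
    hence finC: "finite C" by (rule finite_subset) simp
    define f where "f k l = w {k} * w {l} * (bsgn k (flip k C) * bsgn l (flip l (flip k C))) * b (flip l (flip k C))" for k l :: nat
    have "cmul m w (cmul m w b) C = (\<Sum>k\<in>{1..m}. \<Sum>l\<in>{1..m}. f k l)"
    proof -
      have "cmul m w (cmul m w b) C = (\<Sum>k\<in>{1..m}. w {k} * bsgn k (flip k C) * cmul m w b (flip k C))"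
        by (rule cmul_vec_left[OF w clifford_cmul])
      also have "\<dots> = (\<Sum>k\<in>{1..m}. \<Sum>l\<in>{1..m}. f k l)"
      proof (rule sum.cong[OF refl])
        fix k
        show "w {k} * bsgn k (flip k C) * cmul m w b (flip k C) = (\<Sum>l\<in>{1..m}. f k l)"
          unfolding cmul_vec_left[OF w b] sum_distrib_left f_def
          by (rule sum.cong[OF refl]) (simp only: mult_ac)
      qed
      finally show ?thesis .
    qed
    also have "\<dots> = (\<Sum>k\<in>{1..m}. f k k)"
    proof (rule antisym_dsum)
      fix k l :: nat assume kl: "k \<noteq> l"
      have fk: "finite (flip k C)" "finite (flip l C)" using finC by (simp_all add: flip_finite)
      have s1: "bsgn l (flip l (flip k C)) = - ((if k < l then -1 else 1) * bsgn l C)"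
        unfolding sgn_flip_same sgn_flip_other[OF finC kl] by simp
      have s2: "bsgn k (flip k (flip l C)) = - ((if l < k then -1 else 1) * bsgn k C)"
        unfolding sgn_flip_same sgn_flip_other[OF finC kl[symmetric]] by simp
      have e: "flip k (flip l C) = flip l (flip k C)" by (rule flip_comm)
      have A: "bsgn k (flip k C) * bsgn l (flip l (flip k C)) = bsgn k C * bsgn l C * (if k < l then -1 else 1)"
        unfolding s1 by (simp add: sgn_flip_same)
      have B: "bsgn l (flip l C) * bsgn k (flip k (flip l C)) = bsgn k C * bsgn l C * (if l < k then -1 else 1)"
        unfolding s2 by (simp add: sgn_flip_same)
      have "f l k = w {l} * w {k} * (bsgn k C * bsgn l C * (if l < k then -1 else 1)) * b (flip l (flip k C))"
        using B e by (simp only: f_def)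
      moreover have "f k l = w {k} * w {l} * (bsgn k C * bsgn l C * (if k < l then -1 else 1)) * b (flip l (flip k C))"
        unfolding f_def A by simp
      ultimately show "f l k = - f k l" using kl by (cases "k < l") (simp_all add: mult_ac)
    qed simp
    also have "\<dots> = (\<Sum>k\<in>{1..m}. - (w {k} * w {k}) * b C)"
    proof (intro sum.cong refl)
      fix k
      have "bsgn k (flip k C) * bsgn k C = -1" using sgn_sq[of k C] by (simp add: sgn_flip_same)
      thus "f k k = - (w {k} * w {k}) * b C" by (simp add: f_def)
    qed
    also have "\<dots> = - ip m w w * b C" by (simp add: ip_vec_sq[OF w] sum_distrib_right sum_negf)
    finally show ?thesis .
  qed
qed

definition uvec :: "nat \<Rightarrow> clif \<Rightarrow> bool" where
  "uvec m w \<longleftrightarrow> isvec m w \<and> ip m w w = 1"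

definition emb :: "clif \<Rightarrow> complex \<Rightarrow> clif" where
  "emb w z = (\<lambda>A. Re z * cone A + Im z * w A)"

definition act :: "nat \<Rightarrow> clif \<Rightarrow> complex \<Rightarrow> clif \<Rightarrow> clif" where
  "act m w z a = (\<lambda>C. Re z * a C + Im z * cmul m w a C)"

definition hf :: "nat \<Rightarrow> clif \<Rightarrow> clif \<Rightarrow> clif \<Rightarrow> complex" where
  "hf m w u a = Complex (ip m a u) (ip m a (cmul m w u))"

lemma clifford_cone: "clifford m cone"
  by (simp add: clifford_def cone_def)

lemma isvec_clifford: "isvec m w \<Longrightarrow> clifford m w"
  by (simp add: isvec_def)

lemma uvec_isvec: "uvec m w \<Longrightarrow> isvec m w"
  by (simp add: uvec_def)

lemma clifford_lin: "clifford m a \<Longrightarrow> clifford m b \<Longrightarrow> clifford m (\<lambda>C. x * a C + y * b C)"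
  by (simp add: clifford_def)

lemma clifford_act: "clifford m a \<Longrightarrow> clifford m (act m w z a)"
  unfolding act_def by (rule clifford_lin[OF _ clifford_cmul])

lemma clifford_emb: "isvec m w \<Longrightarrow> clifford m (emb w z)"
  unfolding emb_def by (rule clifford_lin[OF clifford_cone isvec_clifford])

lemma J_cone: "isvec m w \<Longrightarrow> cmul m w cone = w"
  by (rule cmul_cone_right[OF isvec_clifford])

lemma J_w: assumes "uvec m w" shows "cmul m w w = (\<lambda>C. - cone C)"
proof -
  have "cmul m w (cmul m w cone) = (\<lambda>C. - ip m w w * cone C)"
    by (rule J_J[OF uvec_isvec[OF assms] clifford_cone])
  thus ?thesis using assms by (simp add: J_cone uvec_def)
qed

lemma J_J1: assumes "uvec m w" "clifford m b" shows "cmul m w (cmul m w b) = (\<lambda>C. - b C)"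
  using J_J[OF uvec_isvec[OF assms(1)] assms(2)] assms(1) by (simp add: uvec_def)

lemma cmul_emb: assumes "isvec m w" "clifford m a" shows "cmul m (emb w z) a = act m w z a"
  unfolding emb_def act_def cmul_lin_left cmul_cone_left[OF assms(2)] ..

lemma cpow_emb: assumes "uvec m w" shows "cpow m (emb w z) j = emb w (z ^ j)"
proof (induction j)
  case 0
  show ?case by (rule ext) (simp add: emb_def)
next
  case (Suc j)
  have iw: "isvec m w" using assms by (rule uvec_isvec)
  have Je: "cmul m w (emb w z) = (\<lambda>C. Re z * w C + Im z * (- cone C))"
    unfolding emb_def cmul_lin_right J_cone[OF iw] J_w[OF assms] ..
  have "cpow m (emb w z) (Suc j) = act m w (z ^ j) (emb w z)"
    using Suc by (simp add: cmul_emb[OF iw clifford_emb[OF iw]])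
  also have "\<dots> = emb w (z ^ Suc j)"
    unfolding act_def Je by (rule ext) (simp add: emb_def power_Suc2 algebra_simps)
  finally show ?case .
qed

lemma ip_sym: "ip m a b = ip m b a"
  unfolding ip_def by (simp add: mult.commute)

lemma ip_lin_left: "ip m (\<lambda>C. x * a C + y * b C) c = x * ip m a c + y * ip m b c"
  unfolding ip_def by (simp add: sum.distrib sum_distrib_left algebra_simps)

lemma ip_lin_right: "ip m c (\<lambda>C. x * a C + y * b C) = x * ip m c a + y * ip m c b"
  unfolding ip_def by (simp add: sum.distrib sum_distrib_left algebra_simps)

lemma ip_sum_left: "ip m (\<lambda>C. \<Sum>j\<in>S. f j C) c = (\<Sum>j\<in>S. ip m (f j) c)"
  unfolding ip_def by (simp add: sum_distrib_right) (rule sum.swap)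

lemma ip_neg_right: "ip m a (\<lambda>C. - b C) = - ip m a b"
  unfolding ip_def by (simp add: sum_negf)

lemma ip_a_Ja: assumes "isvec m w" "clifford m a" shows "ip m a (cmul m w a) = 0"
  using skew[OF assms assms(2)] ip_sym[of m a "cmul m w a"] by linarith

lemma ip_J_J: assumes "uvec m w" "clifford m a" "clifford m b"
  shows "ip m (cmul m w a) (cmul m w b) = ip m a b"
  using skew[OF uvec_isvec[OF assms(1)] assms(2) clifford_cmul] J_J1[OF assms(1,3)]
  by (simp add: ip_neg_right)

lemma hf_act:
  assumes "uvec m w" "clifford m a" "clifford m u"
  shows "hf m w u (act m w z a) = z * hf m w u a"
proof -
  have iw: "isvec m w" using assms(1) by (rule uvec_isvec)
  have 1: "ip m (act m w z a) u = Re z * ip m a u - Im z * ip m a (cmul m w u)"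
    unfolding act_def ip_lin_left skew[OF iw assms(2,3)] by simp
  have 2: "ip m (act m w z a) (cmul m w u) = Re z * ip m a (cmul m w u) + Im z * ip m a u"
    unfolding act_def ip_lin_left ip_J_J[OF assms] by simp
  show ?thesis unfolding hf_def 1 2 by (simp add: complex_eq_iff algebra_simps)
qed

lemma hf_sum: "hf m w u (\<lambda>C. \<Sum>j\<in>S. f j C) = (\<Sum>j\<in>S. hf m w u (f j))"
  unfolding hf_def by (simp add: complex_eq_iff Re_sum Im_sum ip_sum_left)

lemma ip_scale_left: "ip m (\<lambda>C. r * a C) c = r * ip m a c"
  unfolding ip_def by (simp add: sum_distrib_left mult_ac)

lemma hf_scale: "hf m w u (cscale r a) = of_real r * hf m w u a"
  unfolding hf_def cscale_def ip_scale_left by (simp add: complex_eq_iff)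

lemma ip_nonneg: "ip m a a \<ge> 0"
  unfolding ip_def by (intro sum_nonneg) simp

lemma ip_zero: assumes "clifford m a" "ip m a a = 0" shows "a = (\<lambda>_. 0)"
proof
  fix C
  show "a C = 0"
  proof (cases "C \<in> Pow {1..m}")
    case True
    have "\<forall>A\<in>Pow {1..m}. a A * a A = 0"
      using assms(2) unfolding ip_def by (subst sum_nonneg_eq_0_iff[symmetric]) auto
    thus ?thesis using True by simp
  next
    case False thus ?thesis using assms(1) by (simp add: clifford_def)
  qed
qed

lemma cnorm_ip: "cnorm m a = sqrt (ip m a a)"
  unfolding cnorm_def ip_def by (simp add: power2_eq_square)

lemma act_norm:
  assumes "uvec m w" "clifford m a"
  shows "ip m (act m w z a) (act m w z a) = (norm z)^2 * ip m a a"
proof -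
  have iw: "isvec m w" using assms(1) by (rule uvec_isvec)
  have s: "ip m (cmul m w a) a = 0" using ip_a_Ja[OF iw assms(2)] ip_sym by metis
  show ?thesis
    unfolding act_def ip_lin_left ip_lin_right ip_J_J[OF assms(1,2,2)] ip_a_Ja[OF iw assms(2)] s
    by (simp add: cmod_def algebra_simps power2_eq_square)
qed

lemma cnorm_act: assumes "uvec m w" "clifford m a"
  shows "cnorm m (act m w z a) = norm z * cnorm m a"
  unfolding cnorm_ip act_norm[OF assms] by (simp add: real_sqrt_mult)

lemma act_compose:
  assumes "uvec m w" "clifford m a"
  shows "act m w z1 (act m w z2 a) = act m w (z1 * z2) a"
proof -
  have Ja: "cmul m w (act m w z2 a) = (\<lambda>C. Re z2 * cmul m w a C + Im z2 * (- a C))"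
    unfolding act_def cmul_lin_right J_J1[OF assms] ..
  show ?thesis unfolding act_def[of m w z1] Ja unfolding act_def by (rule ext) (simp add: algebra_simps)
qed

lemma act_one: "act m w 1 a = a"
  by (simp add: act_def)

lemma emb_act: "isvec m w \<Longrightarrow> emb w z = act m w z cone"
  unfolding emb_def act_def J_cone ..

lemma ip_cone: "ip m cone cone = 1"
proof -
  have "ip m cone cone = (if {} \<in> Pow {1..m} then cone {} * cone {} else 0)"
    unfolding ip_def by (rule sum_single_pt) (auto simp: cone_def)
  thus ?thesis by (simp add: cone_def)
qed

lemma cnorm_emb: "uvec m w \<Longrightarrow> cnorm m (emb w z) = norm z"
  using cnorm_act[of m w cone z] uvec_isvec[of m w]
  by (simp add: emb_act clifford_cone cnorm_ip ip_cone)

lemma para_emb: "isvec m w \<Longrightarrow> paravector m (emb w z)"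
  unfolding paravector_def
proof (intro conjI allI impI)
  assume "isvec m w"
  thus "clifford m (emb w z)" by (rule clifford_emb)
  fix A :: "nat set" assume "1 < card A"
  hence "A \<noteq> {}" "card A \<noteq> 1" by auto
  thus "emb w z A = 0" using \<open>isvec m w\<close> by (simp add: emb_def cone_def isvec_def)
qed


lemma bessel:
  assumes uw: "uvec m w" and a: "clifford m a" and u: "clifford m u" and uu: "ip m u u = 1"
  shows "ip m a a = (norm (hf m w u a))^2 + ip m (\<lambda>C. a C - act m w (hf m w u a) u C) (\<lambda>C. a C - act m w (hf m w u a) u C)"
proof -
  have iw: "isvec m w" using uw by (rule uvec_isvec)
  define v where "v = cmul m w u"
  define p where "p = ip m a u"
  define q where "q = ip m a v"
  have r: "(\<lambda>C. a C - act m w (hf m w u a) u C) = (\<lambda>C. a C - p * u C - q * v C)"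
    by (simp add: act_def hf_def p_def q_def v_def algebra_simps)
  have vv: "ip m v v = 1" unfolding v_def ip_J_J[OF uw u u] by (rule uu)
  have uv: "ip m u v = 0" unfolding v_def by (rule ip_a_Ja[OF iw u])
  have vu: "ip m v u = 0" using uv ip_sym by metis
  have ua: "ip m u a = p" using ip_sym p_def by metis
  have va: "ip m v a = q" using ip_sym q_def by metis
  have "ip m (\<lambda>C. a C - p * u C - q * v C) (\<lambda>C. a C - p * u C - q * v C)
      = ip m a a - 2*p*ip m a u - 2*q*ip m a v + p*p*ip m u u + 2*p*q*ip m u v + q*q*ip m v v"
    unfolding ip_def by (simp add: sum.distrib sum_subtractf sum_distrib_left algebra_simps)
  also have "\<dots> = ip m a a - p*p - q*q"
    unfolding uv vv uu p_def[symmetric] q_def[symmetric] by simp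
  finally have "ip m (\<lambda>C. a C - p * u C - q * v C) (\<lambda>C. a C - p * u C - q * v C) = ip m a a - p*p - q*q" .
  moreover have "(norm (hf m w u a))^2 = p*p + q*q"
    by (simp add: hf_def p_def q_def v_def cmod_def power2_eq_square)
  ultimately show ?thesis unfolding r by simp
qed

lemma hf_le:
  assumes "uvec m w" "clifford m a" "clifford m u" "ip m u u = 1"
  shows "norm (hf m w u a) \<le> cnorm m a"
proof -
  have "(norm (hf m w u a))^2 \<le> ip m a a" using bessel[OF assms] ip_nonneg[of m "\<lambda>C. a C - act m w (hf m w u a) u C"] by linarith
  thus ?thesis unfolding cnorm_ip by (simp add: real_le_rsqrt)
qed

lemma clifford_diff: "clifford m a \<Longrightarrow> clifford m b \<Longrightarrow> clifford m (\<lambda>C. a C - b C)"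
  by (simp add: clifford_def)

lemma hf_eq:
  assumes "uvec m w" "clifford m a" "clifford m u" "ip m u u = 1" "cnorm m a \<le> norm (hf m w u a)"
  shows "a = act m w (hf m w u a) u"
proof -
  define r where "r = (\<lambda>C. a C - act m w (hf m w u a) u C)"
  have "ip m a a = (norm (hf m w u a))^2 + ip m r r" unfolding r_def by (rule bessel[OF assms(1-4)])
  moreover have "ip m a a \<le> (norm (hf m w u a))^2"
  proof -
    have "ip m a a = (sqrt (ip m a a))^2" by (simp add: ip_nonneg)
    also have "\<dots> \<le> (norm (hf m w u a))^2"
      by (rule power_mono) (use assms(5) ip_nonneg[of m a] in \<open>simp_all add: cnorm_ip\<close>)
    finally show ?thesis .
  qed
  ultimately have "ip m r r = 0" using ip_nonneg[of m r] by linarith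
  hence "r = (\<lambda>_. 0)" by (rule ip_zero[rotated]) (unfold r_def, intro clifford_diff assms(2) clifford_act assms(3))
  show ?thesis
  proof
    fix C
    have "r C = 0" using \<open>r = (\<lambda>_. 0)\<close> by simp
    thus "a C = act m w (hf m w u a) u C" by (simp add: r_def)
  qed
qed

lemma norm_via_hf:
  assumes "uvec m w" "clifford m y"
  obtains u where "clifford m u" "ip m u u = 1" "hf m w u y = of_real (cnorm m y)"
proof (cases "cnorm m y = 0")
  case True
  have "hf m w cone y = hf m w cone (\<lambda>_. 0)"
  proof -
    have "ip m y y = 0" using True unfolding cnorm_ip by simp
    hence "y = (\<lambda>_. 0)" by (rule ip_zero[OF assms(2)])
    thus ?thesis by simp
  qed
  also have "\<dots> = 0" by (simp add: hf_def ip_def complex_eq_iff)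
  finally show ?thesis using that[of cone] True clifford_cone ip_cone by simp
next
  case False
  define c where "c = cnorm m y"
  have c0: "c > 0" using False ip_nonneg[of m y] unfolding c_def cnorm_ip by (simp add: order_less_le)
  have cc: "c * c = ip m y y" unfolding c_def cnorm_ip using ip_nonneg by simp
  define u where "u = (\<lambda>C. (1/c) * y C)"
  have cu: "clifford m u" using assms(2) by (simp add: u_def clifford_def)
  have "ip m u u = (1/c) * ((1/c) * ip m y y)" unfolding u_def ip_scale_left
    by (subst ip_sym, simp only: ip_scale_left)
  also have "\<dots> = (1/c) * ((1/c) * (c * c))" unfolding cc ..
  also have "\<dots> = 1" using c0 by (simp add: divide_simps)
  finally have uu: "ip m u u = 1" .
  have "ip m y u = ip m u y" by (rule ip_sym)
  also have "\<dots> = (1/c) * ip m y y" unfolding u_def ip_scale_left ..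
  also have "\<dots> = (1/c) * (c * c)" unfolding cc ..
  also have "\<dots> = c" using c0 by (simp add: divide_simps)
  finally have p: "ip m y u = c" .
  have Ju: "cmul m w u = (\<lambda>C. (1/c) * cmul m w y C + 0 * cmul m w y C)"
    unfolding u_def using cmul_lin_right[of m w "1/c" y 0 y] by simp
  have q: "ip m y (cmul m w u) = 0" unfolding Ju ip_lin_right ip_a_Ja[OF uvec_isvec[OF assms(1)] assms(2)] by simp
  show ?thesis using that[OF cu uu] p q by (simp add: hf_def c_def complex_eq_iff)
qed

lemma cnorm_le_hf:
  assumes "uvec m w" "clifford m y"
  obtains u where "clifford m u" "ip m u u = 1" "cnorm m y \<le> norm (hf m w u y)"
proof -
  obtain u where "clifford m u" "ip m u u = 1" "hf m w u y = of_real (cnorm m y)"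
    by (rule norm_via_hf[OF assms])
  thus ?thesis using that by (simp add: cnorm_def)
qed

lemma cmul_zero: "cmul m p (\<lambda>_. 0) = (\<lambda>_. 0)"
  using cmul_lin_right[of m p 0 p 0 p] by simp

lemma act_zero: "act m w z (\<lambda>_. 0) = (\<lambda>_. 0)"
  by (simp add: act_def cmul_zero)

lemma act_diff: "act m w z (\<lambda>C. a C - b C) = (\<lambda>C. act m w z a C - act m w z b C)"
proof -
  have "cmul m w (\<lambda>C. a C - b C) = (\<lambda>C. cmul m w a C - cmul m w b C)"
    using cmul_lin_right[of m w 1 a "-1" b] by simp
  thus ?thesis by (simp add: act_def algebra_simps)
qed

lemma SP:
  assumes "uvec m w" "\<And>j. clifford m (a j)"
  shows "slice_poly m a n (emb w z) = (\<lambda>C. \<Sum>j\<le>n. act m w (z ^ j) (a j) C)"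
  unfolding slice_poly_def cpow_emb[OF assms(1)] cmul_emb[OF uvec_isvec[OF assms(1)] assms(2)] ..

lemma clifford_cscale: "clifford m a \<Longrightarrow> clifford m (cscale r a)"
  by (simp add: clifford_def cscale_def)

lemma SD:
  assumes "uvec m w" "\<And>j. clifford m (a j)"
  shows "slice_poly_deriv m a n (emb w z) = (\<lambda>C. \<Sum>j\<in>{1..n}. act m w (z ^ (j - 1)) (cscale (real j) (a j)) C)"
  unfolding slice_poly_deriv_def cpow_emb[OF assms(1)] cmul_emb[OF uvec_isvec[OF assms(1)] clifford_cscale[OF assms(2)]] ..

lemma hf_SP:
  assumes "uvec m w" "\<And>j. clifford m (a j)" "clifford m u"
  shows "hf m w u (slice_poly m a n (emb w z)) = qp n (\<lambda>j. hf m w u (a j)) z"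
  unfolding SP[OF assms(1,2)] hf_sum hf_act[OF assms(1) assms(2) assms(3)] qp_def
  by (simp add: mult.commute)

lemma hf_SD:
  assumes "uvec m w" "\<And>j. clifford m (a j)" "clifford m u"
  shows "hf m w u (slice_poly_deriv m a n (emb w z)) = dp n (\<lambda>j. hf m w u (a j)) z"
  unfolding SD[OF assms(1,2)] hf_sum hf_act[OF assms(1) clifford_cscale[OF assms(2)] assms(3)] dp_def hf_scale
  by (simp add: mult_ac)

lemma vec_uniq:
  assumes uw: "uvec m w" and n0: "n > 0" and cd: "\<And>j. clifford m (d j)"
    and z: "\<And>z. norm z = 1 \<Longrightarrow> (\<lambda>C. \<Sum>j\<le>n. act m w (z ^ j) (d j) C) = (\<lambda>_. 0)"
  shows "\<forall>j\<le>n. d j = (\<lambda>_. 0)"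
proof (intro allI impI)
  fix i assume i: "i \<le> n"
  define c where "c j = hf m w (d i) (d j)" for j
  have q: "(\<Sum>j\<le>n. c j * z ^ j) = 0" if "norm z = 1" for z
  proof -
    have "(\<Sum>j\<le>n. c j * z ^ j) = hf m w (d i) (\<lambda>C. \<Sum>j\<le>n. act m w (z ^ j) (d j) C)"
      unfolding hf_sum hf_act[OF uw cd cd] c_def by (simp add: mult.commute)
    also have "\<dots> = 0" unfolding z[OF that] by (simp add: hf_def ip_def complex_eq_iff)
    finally show ?thesis .
  qed
  have "\<forall>j\<le>n. c j = 0"
  proof (rule nodes_zero[OF n0])
    show "(1::complex) \<noteq> 0" by simp
    show "(\<Sum>j\<le>n. c j * 1 ^ j) = 0" by (rule q) simp
    show "(\<Sum>j\<le>n. c j * (1 * zeta n k) ^ j) = 0" if "k < n" for k by (rule q) (simp add: norm_zeta)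
  qed
  hence "c i = 0" using i by simp
  hence "ip m (d i) (d i) = 0" unfolding c_def hf_def by (simp add: complex_eq_iff)
  thus "d i = (\<lambda>_. 0)" by (rule ip_zero[OF cd])
qed


lemma cont_if_const: "continuous_on S f \<Longrightarrow> continuous_on S (\<lambda>x. if P then f x else (0::real))"
  by (cases P) auto

lemma cont_cpow: "continuous_on UNIV (\<lambda>x::clif. cpow m x k C)"
proof (induction k arbitrary: C)
  case 0
  show ?case by simp
next
  case (Suc k)
  show ?case unfolding cpow.simps cmul_def
    by (intro continuous_on_sum cont_if_const continuous_on_mult continuous_on_const Suc.IH
        continuous_on_product_coordinates)
qed

lemma cont_D: "continuous_on UNIV (\<lambda>x. cnorm m (slice_poly_deriv m a n x))"
  unfolding cnorm_def slice_poly_deriv_def cmul_def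
  by (intro continuous_on_sum cont_if_const continuous_on_mult continuous_on_const cont_cpow
        continuous_on_power continuous_on_real_sqrt)

lemma cont_cnorm: "continuous_on UNIV (\<lambda>x. cnorm m x)"
  unfolding cnorm_def
  by (intro continuous_on_sum continuous_on_power continuous_on_real_sqrt continuous_on_product_coordinates)

lemma closed_coord_zero: "closed {x :: clif. \<forall>A. Q A \<longrightarrow> x A = 0}"
proof -
  have "{x :: clif. \<forall>A. Q A \<longrightarrow> x A = 0} = (\<Inter>A\<in>{A. Q A}. {x. x A = 0})" by auto
  moreover have "closed {x :: clif. x A = 0}" for A
    by (rule closed_Collect_eq) (simp_all add: continuous_on_const)
  ultimately show ?thesis by (simp add: closed_INT)
qed

lemma compact_K: "compact {x. paravector m x \<and> cnorm m x \<le> 1}"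
proof -
  define B0 where "B0 = (PiE UNIV (\<lambda>_::nat set. {-1..1::real}))"
  have "compactin (product_topology (\<lambda>_. euclidean) UNIV) B0"
    unfolding B0_def compactin_PiE by simp
  hence cB: "compact B0" unfolding euclidean_product_topology compactin_euclidean_iff .
  define K2 where "K2 = {x :: clif. \<forall>A. \<not> A \<subseteq> {1..m} \<longrightarrow> x A = 0} \<inter> {x. \<forall>A. 1 < card A \<longrightarrow> x A = 0}
      \<inter> {x. cnorm m x \<le> 1}"
  have cK2: "closed K2" unfolding K2_def
    by (intro closed_Int closed_coord_zero closed_Collect_le cont_cnorm continuous_on_const)
  have eq: "{x. paravector m x \<and> cnorm m x \<le> 1} = B0 \<inter> K2"
  proof (intro set_eqI iffI)
    fix x assume x: "x \<in> {x. paravector m x \<and> cnorm m x \<le> 1}"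
    have "x \<in> B0" unfolding B0_def PiE_UNIV_domain Pi_iff
    proof (intro ballI)
      fix A :: "nat set"
      show "x A \<in> {-1..1}"
      proof (cases "A \<in> Pow {1..m}")
        case True
        have "(x A)^2 \<le> (\<Sum>B\<in>Pow {1..m}. (x B)^2)"
          by (rule member_le_sum) (use True in auto)
        also have "\<dots> = (cnorm m x)^2" unfolding cnorm_def by (simp add: sum_nonneg)
        also have "\<dots> \<le> 1" using x by (simp add: cnorm_def sum_nonneg)
        finally have "(x A)^2 \<le> 1" .
        hence "\<bar>x A\<bar> \<le> 1" by (simp add: abs_square_le_1)
        thus ?thesis by (simp add: abs_le_iff)
      next
        case False
        thus ?thesis using x by (simp add: paravector_def clifford_def)
      qed
    qed
    thus "x \<in> B0 \<inter> K2" using x by (simp add: K2_def paravector_def clifford_def)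
  next
    fix x assume "x \<in> B0 \<inter> K2"
    thus "x \<in> {x. paravector m x \<and> cnorm m x \<le> 1}" by (simp add: K2_def paravector_def clifford_def)
  qed
  show ?thesis unfolding eq by (rule compact_Int_closed[OF cB cK2])
qed

definition e1 :: clif where "e1 = (\<lambda>A. if A = {1} then 1 else 0)"

lemma uvec_e1: "m \<ge> 1 \<Longrightarrow> uvec m e1"
proof -
  assume m: "m \<ge> 1"
  have "isvec m e1" unfolding isvec_def clifford_def e1_def using m by auto
  moreover have "ip m e1 e1 = (if {1} \<in> Pow {1..m} then e1 {1} * e1 {1} else 0)"
    unfolding ip_def by (rule sum_single_pt) (auto simp: e1_def)
  ultimately show ?thesis using m by (simp add: uvec_def e1_def)
qed

lemma emb_e1_1: "emb e1 1 = cone"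
  by (simp add: emb_def)

lemma clifford_sum: "(\<And>j. clifford m (f j)) \<Longrightarrow> clifford m (\<lambda>C. \<Sum>j\<in>S. f j C)"
  by (simp add: clifford_def)

lemma clifford_P: "clifford m (slice_poly m a n x)"
  unfolding slice_poly_def by (rule clifford_sum, rule clifford_cmul)

lemma clifford_D: "clifford m (slice_poly_deriv m a n x)"
  unfolding slice_poly_deriv_def by (rule clifford_sum, rule clifford_cmul)

lemma para_decomp:
  assumes m: "m \<ge> 1" and x: "paravector m x"
  obtains w z where "uvec m w" "x = emb w z" "norm z = cnorm m x"
proof -
  define v where "v = (\<lambda>A. if card A = 1 then x A else 0)"
  have cx: "clifford m x" using x by (simp add: paravector_def)
  have iv: "isvec m v" using cx unfolding isvec_def clifford_def v_def by auto
  have xv: "x A = x {} * cone A + v A" for A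
  proof (cases "A = {}")
    case True thus ?thesis by (simp add: cone_def v_def)
  next
    case False
    show ?thesis
    proof (cases "card A = 1")
      case True thus ?thesis using False by (simp add: cone_def v_def)
    next
      case c1: False
      show ?thesis
      proof (cases "1 < card A")
        case True thus ?thesis using x c1 False by (simp add: paravector_def cone_def v_def)
      next
        case False
        hence "card A = 0" using c1 by linarith
        hence "infinite A" using \<open>A \<noteq> {}\<close> by auto
        hence "\<not> A \<subseteq> {1..m}" using finite_subset by blast
        thus ?thesis using cx c1 \<open>A \<noteq> {}\<close> by (simp add: clifford_def cone_def v_def)
      qed
    qed
  qed
  obtain w z where uw: "uvec m w" and xe: "x = emb w z"
  proof (cases "ip m v v = 0")
    case True
    hence v0: "v = (\<lambda>_. 0)" by (rule ip_zero[OF isvec_clifford[OF iv]])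
    have "x = emb e1 (of_real (x {}))"
      by (rule ext) (subst xv, simp add: emb_def v0)
    thus ?thesis using that uvec_e1[OF m] by blast
  next
    case False
    define r where "r = sqrt (ip m v v)"
    have r0: "r > 0" using False ip_nonneg[of m v] unfolding r_def by (simp add: order_less_le)
    have rr: "r * r = ip m v v" unfolding r_def using ip_nonneg[of m v] by simp
    define w where "w = (\<lambda>A. (1/r) * v A)"
    have iw: "isvec m w" using iv unfolding w_def isvec_def clifford_def by auto
    have "ip m w w = (1/r) * ((1/r) * ip m v v)"
      unfolding w_def ip_scale_left by (subst ip_sym, simp only: ip_scale_left)
    also have "\<dots> = 1" using r0 rr[symmetric] by (simp add: divide_simps)
    finally have "uvec m w" using iw by (simp add: uvec_def)
    moreover have "x = emb w (Complex (x {}) r)"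
      by (rule ext) (subst xv, use r0 in \<open>simp add: emb_def w_def\<close>)
    ultimately show ?thesis using that by blast
  qed
  moreover have "norm z = cnorm m x" using cnorm_emb[OF uw] xe by simp
  ultimately show ?thesis using that by blast
qed

lemma collapse_gen:
  assumes "\<And>j. j < n \<Longrightarrow> a j = (\<lambda>_. 0)"
  shows "slice_poly m a n x = cmul m (cpow m x n) (a n)"
proof
  fix C
  have "slice_poly m a n x C = (if n \<in> {..n} then cmul m (cpow m x n) (a n) C else 0)"
    unfolding slice_poly_def
  proof (rule sum_single_pt)
    fix j assume "j \<in> {..n}" "j \<noteq> n"
    hence "a j = (\<lambda>_. 0)" using assms by simp
    thus "cmul m (cpow m x j) (a j) C = 0" by (simp add: cmul_zero)
  qed simp
  thus "slice_poly m a n x C = cmul m (cpow m x n) (a n) C" by simp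
qed

lemma collapse_P:
  assumes "uvec m w" "\<And>j. clifford m (a j)" "\<And>j. j < n \<Longrightarrow> a j = (\<lambda>_. 0)"
  shows "slice_poly m a n (emb w z) = act m w (z ^ n) (a n)"
  by (simp add: collapse_gen[OF assms(3)] cpow_emb[OF assms(1)] cmul_emb[OF uvec_isvec[OF assms(1)] assms(2)])

lemma collapse_D:
  assumes "uvec m w" "\<And>j. clifford m (a j)" "\<And>j. j < n \<Longrightarrow> a j = (\<lambda>_. 0)" "n > 0"
  shows "slice_poly_deriv m a n (emb w z) = act m w (z ^ (n - 1)) (cscale (real n) (a n))"
proof
  fix C
  have "slice_poly_deriv m a n (emb w z) C = (if n \<in> {1..n} then act m w (z ^ (n - 1)) (cscale (real n) (a n)) C else 0)"
    unfolding SD[OF assms(1,2)]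
  proof (rule sum_single_pt)
    fix j assume "j \<in> {1..n}" "j \<noteq> n"
    hence "a j = (\<lambda>_. 0)" using assms(3) by simp
    thus "act m w (z ^ (j - 1)) (cscale (real j) (a j)) C = 0" by (simp add: cscale_def act_zero)
  qed simp
  thus "slice_poly_deriv m a n (emb w z) C = act m w (z ^ (n - 1)) (cscale (real n) (a n)) C" using assms(4) by simp
qed

lemma uniq_P:
  assumes uw: "uvec m w" and n0: "n > 0" and ca: "\<And>j. clifford m (a j)" and ce: "clifford m e"
    and h: "\<And>z. norm z = 1 \<Longrightarrow> slice_poly m a n (emb w z) = act m w (z ^ n) e"
  shows "(\<forall>j<n. a j = (\<lambda>_. 0)) \<and> a n = e"
proof -
  define d where "d j = (if j = n then (\<lambda>C. a j C - e C) else a j)" for j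
  have cd: "clifford m (d j)" for j unfolding d_def using ca ce by (auto intro: clifford_diff)
  have "\<forall>j\<le>n. d j = (\<lambda>_. 0)"
  proof (rule vec_uniq[OF uw n0 cd])
    fix z :: complex assume z: "norm z = 1"
    show "(\<lambda>C. \<Sum>j\<le>n. act m w (z ^ j) (d j) C) = (\<lambda>_. 0)"
    proof
      fix C
      have "(\<Sum>j\<le>n. act m w (z ^ j) (d j) C) = (\<Sum>j\<le>n. act m w (z ^ j) (a j) C - (if j = n then act m w (z ^ n) e C else 0))"
        by (intro sum.cong refl) (simp add: d_def act_diff)
      also have "\<dots> = (\<Sum>j\<le>n. act m w (z ^ j) (a j) C) - act m w (z ^ n) e C"
        by (simp add: sum_subtractf)
      also have "(\<Sum>j\<le>n. act m w (z ^ j) (a j) C) = act m w (z ^ n) e C"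
        using fun_cong[OF h[OF z], of C] unfolding SP[OF uw ca] .
      finally show "(\<Sum>j\<le>n. act m w (z ^ j) (d j) C) = 0" by simp
    qed
  qed
  hence D: "\<And>j. j \<le> n \<Longrightarrow> d j = (\<lambda>_. 0)" by blast
  have "\<forall>j<n. a j = (\<lambda>_. 0)"
  proof (intro allI impI)
    fix j assume j: "j < n"
    have "d j = a j" using j by (simp add: d_def)
    thus "a j = (\<lambda>_. 0)" using D[of j] j by simp
  qed
  moreover have "a n = e"
  proof
    fix C
    have "d n C = 0" using D[of n] by simp
    thus "a n C = e C" by (simp add: d_def)
  qed
  ultimately show ?thesis by simp
qed

lemma cnorm_cscale: "r \<ge> 0 \<Longrightarrow> cnorm m (cscale r a) = r * cnorm m a"
  unfolding cnorm_ip cscale_def ip_scale_left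
  by (subst ip_sym, simp only: ip_scale_left) (simp add: real_sqrt_mult mult.assoc[symmetric])

lemma cnorm_nonneg: "0 \<le> cnorm m a"
  by (simp add: cnorm_def sum_nonneg)

theorem theorem1p2:
  fixes m n :: nat and a :: "nat \<Rightarrow> clif"
  assumes "m \<ge> 1"
    and "\<And>j. clifford m (a j)"
    and "a n \<noteq> (\<lambda>_. 0)"
  shows "sup_norm m (slice_poly_deriv m a n) \<le> real n * sup_norm m (slice_poly m a n)
       \<and> (sup_norm m (slice_poly_deriv m a n) = real n * sup_norm m (slice_poly m a n)
         \<longleftrightarrow> (\<exists>b. clifford m b \<and>
                (\<forall>x. paravector m x \<longrightarrow> slice_poly m a n x = cmul m (cpow m x n) b)))"
proof -
  note m1 = assms(1) and ca = assms(2) and an = assms(3)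
  define K where "K = {x. paravector m x \<and> cnorm m x \<le> 1}"
  define P where "P = slice_poly m a n"
  define D where "D = slice_poly_deriv m a n"
  define M where "M = sup_norm m P"
  define SD where "SD = sup_norm m D"
  have Mdef: "M = Sup ((\<lambda>x. cnorm m (P x)) ` K)" unfolding M_def sup_norm_def K_def ..
  have SDdef: "SD = Sup ((\<lambda>x. cnorm m (D x)) ` K)" unfolding SD_def sup_norm_def K_def ..
  have ue1: "uvec m e1" by (rule uvec_e1[OF m1])
  have embK: "emb w z \<in> K" if "uvec m w" "norm z \<le> 1" for w z
    using that para_emb[OF uvec_isvec] cnorm_emb by (simp add: K_def)
  have coneK: "cone \<in> K" using embK[OF ue1, of 1] by (simp add: emb_e1_1)
  have Kne: "K \<noteq> {}" using coneK by blast
  have decK: "\<exists>w z. uvec m w \<and> x = emb w z \<and> norm z \<le> 1" if xK: "x \<in> K" for x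
  proof -
    have px: "paravector m x" using that by (simp add: K_def)
    obtain w z where "uvec m w" "x = emb w z" "norm z = cnorm m x"
      by (rule para_decomp[OF m1 px])
    moreover have "norm z \<le> 1" using that calculation(3) by (simp add: K_def)
    ultimately show ?thesis by blast
  qed
  have Pbd: "cnorm m (P x) \<le> (\<Sum>j\<le>n. cnorm m (a j))" if xK: "x \<in> K" for x
  proof -
    obtain w z where uw: "uvec m w" and xe: "x = emb w z" and z1: "norm z \<le> 1" using decK[OF xK] by blast
    obtain u where cu: "clifford m u" and uu: "ip m u u = 1" and le: "cnorm m (P x) \<le> norm (hf m w u (P x))"
      using cnorm_le_hf[OF uw clifford_P[of m a n x]] unfolding P_def by blast
    have "norm (hf m w u (P x)) = norm (qp n (\<lambda>j. hf m w u (a j)) z)"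
      unfolding xe P_def hf_SP[OF uw ca cu] ..
    also have "\<dots> \<le> (\<Sum>j\<le>n. norm (hf m w u (a j) * z ^ j))" unfolding qp_def by (rule norm_sum)
    also have "\<dots> \<le> (\<Sum>j\<le>n. cnorm m (a j))"
    proof (rule sum_mono)
      fix j
      have "norm (hf m w u (a j)) \<le> cnorm m (a j)" by (rule hf_le[OF uw ca cu uu])
      moreover have "norm (z ^ j) \<le> 1" using z1 by (simp add: norm_power power_le_one)
      ultimately have "norm (hf m w u (a j)) * norm (z ^ j) \<le> cnorm m (a j) * 1"
        by (intro mult_mono) (simp_all add: cnorm_nonneg)
      thus "norm (hf m w u (a j) * z ^ j) \<le> cnorm m (a j)" by (simp add: norm_mult)
    qed
    finally show ?thesis using le by linarith
  qed
  have bddP: "bdd_above ((\<lambda>x. cnorm m (P x)) ` K)" by (rule bdd_aboveI2, rule Pbd)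
  have PM: "cnorm m (P x) \<le> M" if xK: "x \<in> K" for x
    unfolding Mdef by (rule cSup_upper[OF imageI[OF that] bddP])
  have M0: "M \<ge> 0" using PM[OF coneK] cnorm_nonneg[of m "P cone"] by linarith
  have circ: "norm (qp n (\<lambda>j. hf m w u (a j)) z) \<le> M"
    if uw: "uvec m w" and cu: "clifford m u" and uu: "ip m u u = 1" and z1: "norm z \<le> 1" for w u z
  proof -
    have "norm (qp n (\<lambda>j. hf m w u (a j)) z) = norm (hf m w u (P (emb w z)))"
      unfolding P_def hf_SP[OF uw ca cu] ..
    also have "\<dots> \<le> cnorm m (P (emb w z))" by (rule hf_le[OF uw _ cu uu]) (simp add: P_def clifford_P)
    also have "\<dots> \<le> M" by (rule PM[OF embK[OF uw z1]])
    finally show ?thesis .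
  qed
  have DM: "cnorm m (D x) \<le> real n * M" if xK: "x \<in> K" for x
  proof (cases "n = 0")
    case True
    have "D x = (\<lambda>_. 0)" by (simp add: D_def slice_poly_deriv_def True)
    thus ?thesis by (simp add: cnorm_def True)
  next
    case False
    hence n0: "n > 0" by simp
    obtain w z where uw: "uvec m w" and xe: "x = emb w z" and z1: "norm z \<le> 1" using decK[OF xK] by blast
    obtain u where cu: "clifford m u" and uu: "ip m u u = 1" and le: "cnorm m (D x) \<le> norm (hf m w u (D x))"
      using cnorm_le_hf[OF uw clifford_D[of m a n x]] unfolding D_def by blast
    have "norm (hf m w u (D x)) = norm (dp n (\<lambda>j. hf m w u (a j)) z)"
      unfolding xe D_def hf_SD[OF uw ca cu] ..
    also have "\<dots> \<le> real n * M"
      by (rule bern_disc[OF n0 _ z1]) (rule circ[OF uw cu uu], simp)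
    finally show ?thesis using le by linarith
  qed
  have bddD: "bdd_above ((\<lambda>x. cnorm m (D x)) ` K)" by (rule bdd_aboveI2, rule DM)
  have ineq: "SD \<le> real n * M"
    unfolding SDdef by (rule cSup_least) (use Kne DM in auto)
  have iff: "SD = real n * M \<longleftrightarrow> (\<exists>b. clifford m b \<and> (\<forall>x. paravector m x \<longrightarrow> P x = cmul m (cpow m x n) b))"
  proof (cases "n = 0")
    case True
    have "D x = (\<lambda>_. 0)" for x by (simp add: D_def slice_poly_deriv_def True)
    hence "(\<lambda>x. cnorm m (D x)) ` K = {0}" using Kne by (auto simp: cnorm_def)
    hence "SD = 0" unfolding SDdef by simp
    moreover have "P x = cmul m (cpow m x n) (a 0)" for x
      by (rule ext) (simp add: P_def slice_poly_def True)
    ultimately show ?thesis using True ca by auto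
  next
    case False
    hence n0: "n > 0" by simp
    have Mpos: "M > 0"
    proof (rule ccontr)
      assume "\<not> M > 0"
      hence M00: "M = 0" using M0 by simp
      have "(\<forall>j<n. a j = (\<lambda>_. 0)) \<and> a n = (\<lambda>_. 0)"
      proof (rule uniq_P[OF ue1 n0 ca])
        show "clifford m (\<lambda>_. 0)" by (simp add: clifford_def)
        fix z :: complex assume z: "norm z = 1"
        have "cnorm m (P (emb e1 z)) \<le> 0" using PM[OF embK[OF ue1]] z M00 by simp
        hence "cnorm m (P (emb e1 z)) = 0" using cnorm_nonneg[of m "P (emb e1 z)"] by linarith
        hence "ip m (P (emb e1 z)) (P (emb e1 z)) = 0" unfolding cnorm_ip using ip_nonneg by simp
        hence "P (emb e1 z) = (\<lambda>_. 0)" by (rule ip_zero[rotated]) (simp add: P_def clifford_P)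
        thus "slice_poly m a n (emb e1 z) = act m e1 (z ^ n) (\<lambda>_. 0)" by (simp add: P_def act_zero)
      qed
      thus False using an by simp
    qed
    show ?thesis
    proof
      assume eq: "SD = real n * M"
      obtain xs where xsK: "xs \<in> K" and xsmax: "\<And>y. y \<in> K \<Longrightarrow> cnorm m (D y) \<le> cnorm m (D xs)"
        using continuous_attains_sup[OF compact_K[of m, folded K_def] Kne, of "\<lambda>x. cnorm m (D x)"]
          continuous_on_subset[OF cont_D[of m a n, folded D_def]] by blast
      have "SD = cnorm m (D xs)" unfolding SDdef by (rule cSup_eq_maximum) (use xsK xsmax in auto)
      hence Dxs: "cnorm m (D xs) = real n * M" using eq by simp
      obtain w zs where uw: "uvec m w" and xe: "xs = emb w zs" and zs1: "norm zs \<le> 1" using decK[OF xsK] by blast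
      obtain u where cu: "clifford m u" and uu: "ip m u u = 1" and hu: "hf m w u (D xs) = of_real (cnorm m (D xs))"
        using norm_via_hf[OF uw clifford_D[of m a n xs]] unfolding D_def by blast
      define c where "c j = hf m w u (a j)" for j
      have "dp n c zs = hf m w u (D xs)" unfolding c_def xe D_def hf_SD[OF uw ca cu] ..
      hence dpz: "dp n c zs = of_real (real n * M)" using hu Dxs by simp
      have circ1: "norm (qp n c z) \<le> M" if "norm z = 1" for z
        unfolding c_def by (rule circ[OF uw cu uu]) (use that in simp)
      have ndp: "norm (dp n c zs) = real n * M"
        unfolding dpz norm_of_real using M0 by (simp add: abs_of_nonneg)
      have ge: "real n * M \<le> norm (dp n c zs)" using ndp by simp
      have c0: "\<forall>j<n. c j = 0" by (rule bern_eq[OF n0 circ1 zs1 ge])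
      have dpn: "dp n c z = of_nat n * c n * z ^ (n - 1)" for z
      proof -
        have "dp n c z = (if n \<in> {1..n} then of_nat n * c n * z ^ (n - 1) else 0)"
          unfolding dp_def by (rule sum_single_pt) (use c0 in auto)
        thus ?thesis using n0 by simp
      qed
      have qpn: "qp n c z = c n * z ^ n" for z
      proof -
        have "qp n c z = (if n \<in> {..n} then c n * z ^ n else 0)"
          unfolding qp_def by (rule sum_single_pt) (use c0 in auto)
        thus ?thesis by simp
      qed
      have cnM: "M \<le> norm (c n)"
      proof -
        have "real n * M = norm (dp n c zs)" using ndp by simp
        also have "\<dots> = real n * (norm (c n) * norm zs ^ (n - 1))" unfolding dpn by (simp add: norm_mult norm_power)
        also have "\<dots> \<le> real n * norm (c n)"
        proof -
          have "norm zs ^ (n - 1) \<le> 1" using zs1 by (simp add: power_le_one)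
          hence "norm (c n) * norm zs ^ (n - 1) \<le> norm (c n)" by (simp add: mult_left_le)
          thus ?thesis by (simp add: mult_left_mono)
        qed
        finally show ?thesis using n0 by simp
      qed
      have "(\<forall>j<n. a j = (\<lambda>_. 0)) \<and> a n = act m w (c n) u"
      proof (rule uniq_P[OF uw n0 ca clifford_act[OF cu]])
        fix z :: complex assume z: "norm z = 1"
        have cP: "clifford m (P (emb w z))" by (simp add: P_def clifford_P)
        have hP: "hf m w u (P (emb w z)) = c n * z ^ n"
          unfolding P_def hf_SP[OF uw ca cu] c_def[symmetric] qpn ..
        have "cnorm m (P (emb w z)) \<le> M" using PM[OF embK[OF uw]] z by simp
        hence "cnorm m (P (emb w z)) \<le> norm (c n)" using cnM by linarith
        hence "cnorm m (P (emb w z)) \<le> norm (hf m w u (P (emb w z)))"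
          using z by (simp add: hP norm_mult norm_power)
        hence "P (emb w z) = act m w (hf m w u (P (emb w z))) u" by (rule hf_eq[OF uw cP cu uu])
        also have "\<dots> = act m w (z ^ n) (act m w (c n) u)"
          unfolding hP act_compose[OF uw cu] by (simp add: mult.commute)
        finally show "slice_poly m a n (emb w z) = act m w (z ^ n) (act m w (c n) u)" unfolding P_def .
      qed
      hence "\<And>j. j < n \<Longrightarrow> a j = (\<lambda>_. 0)" by blast
      hence "P x = cmul m (cpow m x n) (a n)" for x unfolding P_def by (rule collapse_gen)
      thus "\<exists>b. clifford m b \<and> (\<forall>x. paravector m x \<longrightarrow> P x = cmul m (cpow m x n) b)"
        using ca by blast
    next
      assume "\<exists>b. clifford m b \<and> (\<forall>x. paravector m x \<longrightarrow> P x = cmul m (cpow m x n) b)"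
      then obtain b where cb: "clifford m b" and hb: "\<And>x. paravector m x \<Longrightarrow> P x = cmul m (cpow m x n) b" by blast
      have "(\<forall>j<n. a j = (\<lambda>_. 0)) \<and> a n = b"
      proof (rule uniq_P[OF ue1 n0 ca cb])
        fix z :: complex
        have "P (emb e1 z) = cmul m (cpow m (emb e1 z) n) b" by (rule hb[OF para_emb[OF uvec_isvec[OF ue1]]])
        also have "\<dots> = act m e1 (z ^ n) b" unfolding cpow_emb[OF ue1] cmul_emb[OF uvec_isvec[OF ue1] cb] ..
        finally show "slice_poly m a n (emb e1 z) = act m e1 (z ^ n) b" unfolding P_def .
      qed
      hence az: "\<And>j. j < n \<Longrightarrow> a j = (\<lambda>_. 0)" by blast
      have Pn: "cnorm m (P x) \<le> cnorm m (a n)" if xK: "x \<in> K" for x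
      proof -
        obtain w z where uw: "uvec m w" and xe: "x = emb w z" and z1: "norm z \<le> 1" using decK[OF xK] by blast
        have Px: "P x = act m w (z ^ n) (a n)" unfolding xe P_def by (rule collapse_P[OF uw ca az])
        have "cnorm m (P x) = norm z ^ n * cnorm m (a n)"
          unfolding Px cnorm_act[OF uw ca] by (simp add: norm_power)
        also have "\<dots> \<le> cnorm m (a n)" using z1 by (intro mult_left_le_one_le) (auto simp: power_le_one cnorm_nonneg)
        finally show ?thesis .
      qed
      have Pc: "P cone = act m e1 (1 ^ n) (a n)" unfolding emb_e1_1[symmetric] P_def by (rule collapse_P[OF ue1 ca az])
      have P1: "cnorm m (P cone) = cnorm m (a n)"
        unfolding Pc cnorm_act[OF ue1 ca] by simp
      have Meq: "M = cnorm m (a n)" unfolding Mdef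
        by (rule cSup_eq_maximum[OF image_eqI[where f="\<lambda>x. cnorm m (P x)", OF P1[symmetric] coneK]]) (use Pn in auto)
      have Dn: "cnorm m (D x) \<le> real n * cnorm m (a n)" if xK: "x \<in> K" for x
      proof -
        obtain w z where uw: "uvec m w" and xe: "x = emb w z" and z1: "norm z \<le> 1" using decK[OF xK] by blast
        have Dx: "D x = act m w (z ^ (n - 1)) (cscale (real n) (a n))" unfolding xe D_def by (rule collapse_D[OF uw ca az n0])
        have "cnorm m (D x) = norm z ^ (n - 1) * (real n * cnorm m (a n))"
          unfolding Dx cnorm_act[OF uw clifford_cscale[OF ca]] cnorm_cscale[OF of_nat_0_le_iff]
          by (simp add: norm_power)
        also have "\<dots> \<le> real n * cnorm m (a n)" using z1 by (intro mult_left_le_one_le) (auto simp: power_le_one cnorm_nonneg)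
        finally show ?thesis .
      qed
      have Dc: "D cone = act m e1 (1 ^ (n - 1)) (cscale (real n) (a n))" unfolding emb_e1_1[symmetric] D_def by (rule collapse_D[OF ue1 ca az n0])
      have D1: "cnorm m (D cone) = real n * cnorm m (a n)"
        unfolding Dc cnorm_act[OF ue1 clifford_cscale[OF ca]] cnorm_cscale[OF of_nat_0_le_iff]
        by simp
      have "SD = real n * cnorm m (a n)" unfolding SDdef
        by (rule cSup_eq_maximum[OF image_eqI[where f="\<lambda>x. cnorm m (D x)", OF D1[symmetric] coneK]]) (use Dn in auto)
      thus "SD = real n * M" using Meq by simp
    qed
  qed
  show ?thesis using ineq iff unfolding SD_def M_def D_def P_def by simp
qed

end
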